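(* Let $n\ge2$, $f\in\mathcal{E}$, and suppose $Q(f)=0$. Then for every integer $k\ge1$ there exists a smooth function $\widetilde f$ on $\mathbb{C}^{n+1}\setminus\{0\}$, homogeneous of degree $(0,0)$, with $\widetilde f|_{\mathcal{N}}=f$ and $\Delta\widetilde f=O(L^k)$.
   Context: On $\mathbb{C}^{n+1}$ with coordinates $\zeta=(\zeta_0,\dots,\zeta_n)$ put $L(\zeta)=|\zeta_0|^2-\sum_{j=1}^n|\zeta_j|^2$, $\mathcal{N}=\{\zeta\ne0:L(\zeta)=0\}$, $\Delta=\partial_{\zeta_0}\partial_{\bar\zeta_0}-\sum_{j=1}^n\partial_{\zeta_j}\partial_{\bar\zeta_j}$. Homogeneous of degree $(p,q)$ means $\widetilde f(\lambda\zeta)=\lambda^p\bar\lambda^q\widetilde f(\zeta)$. $\mathcal{E}=\{f\in C^\infty(\mathcal{N},\mathbb{R}):f(\lambda\zeta)=f(\zeta)\}$. $u=O(L^k)$ means $u=L^kh$ with $h$ smooth. For $f\in\mathcal{E}$, $Q(f)=(\Delta^n\widetilde f)|_{\mathcal{N}}$ where $\widetilde f$ is any smooth homogeneous degree $(0,0)$ extension of $f$ (this is independent of the extension). *)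

theory Defs
  imports "HOL-Analysis.Analysis"
begin

text \<open>Coordinates: \<open>\<complex>^{n+1}\<close> is \<open>complex ^ ('n option)\<close>, where the index \<open>None\<close>
  is \<open>\<zeta>\<^sub>0\<close> and \<open>Some j\<close> (j :: 'n) are \<open>\<zeta>\<^sub>1, \<dots>, \<zeta>\<^sub>n\<close>; so n = CARD('n).\<close>

type_synonym 'n cvec = "complex ^ ('n option)"

text \<open>C^k on an (open) set, via iterated Frechet (real) derivatives; smooth = C^k for all k.\<close>
fun Ck :: "nat \<Rightarrow> 'a::real_normed_vector set \<Rightarrow> ('a \<Rightarrow> 'b::real_normed_vector) \<Rightarrow> bool" where
  "Ck 0 S f = continuous_on S f"
| "Ck (Suc k) S f = (f differentiable_on S \<and> (\<forall>v. Ck k S (\<lambda>x. frechet_derivative f (at x) v)))"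

definition smooth_on :: "'a::real_normed_vector set \<Rightarrow> ('a \<Rightarrow> 'b::real_normed_vector) \<Rightarrow> bool" where
  "smooth_on S f \<longleftrightarrow> (\<forall>k. Ck k S f)"

definition punct :: "'n::finite cvec set" where
  "punct = - {0}"

definition Lform :: "'n::finite cvec \<Rightarrow> real" where
  "Lform \<zeta> = (cmod (\<zeta> $ None))\<^sup>2 - (\<Sum>j\<in>UNIV. (cmod (\<zeta> $ Some j))\<^sup>2)"

definition nullcone :: "'n::finite cvec set" where
  "nullcone = {\<zeta>. \<zeta> \<noteq> 0 \<and> Lform \<zeta> = 0}"

text \<open>Real partial derivatives along \<open>x_j\<close> and \<open>y_j\<close> where \<open>\<zeta>_j = x_j + i y_j\<close>.\<close>
definition dx :: "'n::finite option \<Rightarrow> ('n cvec \<Rightarrow> complex) \<Rightarrow> 'n cvec \<Rightarrow> complex" where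
  "dx j F z = frechet_derivative F (at z) (axis j 1)"

definition dy :: "'n::finite option \<Rightarrow> ('n cvec \<Rightarrow> complex) \<Rightarrow> 'n cvec \<Rightarrow> complex" where
  "dy j F z = frechet_derivative F (at z) (axis j \<i>)"

definition dz :: "'n::finite option \<Rightarrow> ('n cvec \<Rightarrow> complex) \<Rightarrow> 'n cvec \<Rightarrow> complex" where
  "dz j F z = (dx j F z - \<i> * dy j F z) / 2"

definition dzbar :: "'n::finite option \<Rightarrow> ('n cvec \<Rightarrow> complex) \<Rightarrow> 'n cvec \<Rightarrow> complex" where
  "dzbar j F z = (dx j F z + \<i> * dy j F z) / 2"

definition Lap :: "('n::finite cvec \<Rightarrow> complex) \<Rightarrow> 'n cvec \<Rightarrow> complex" where
  "Lap F z = dz None (dzbar None F) z - (\<Sum>j\<in>UNIV. dz (Some j) (dzbar (Some j) F) z)"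

definition hom00 :: "('n::finite cvec \<Rightarrow> 'b) \<Rightarrow> bool" where
  "hom00 F \<longleftrightarrow> (\<forall>\<zeta> (c::complex). \<zeta> \<noteq> 0 \<and> c \<noteq> 0 \<longrightarrow> F (c *s \<zeta>) = F \<zeta>)"

text \<open>Smooth real functions on \<open>\<N>\<close>: restrictions to the closed embedded submanifold \<open>\<N>\<close>
  of smooth functions on \<open>\<complex>^{n+1} \<setminus> {0}\<close> (only values on \<open>\<N>\<close> matter).\<close>
definition smooth_on_N :: "('n::finite cvec \<Rightarrow> real) \<Rightarrow> bool" where
  "smooth_on_N f \<longleftrightarrow> (\<exists>g. smooth_on punct g \<and> (\<forall>\<zeta>\<in>nullcone. g \<zeta> = f \<zeta>))"

definition Eclass :: "('n::finite cvec \<Rightarrow> real) set" where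
  "Eclass = {f. smooth_on_N f \<and> (\<forall>\<zeta>\<in>nullcone. \<forall>c::complex. c \<noteq> 0 \<longrightarrow> f (c *s \<zeta>) = f \<zeta>)}"

definition hom_ext :: "('n::finite cvec \<Rightarrow> real) \<Rightarrow> ('n cvec \<Rightarrow> real) \<Rightarrow> bool" where
  "hom_ext f F \<longleftrightarrow> smooth_on punct F \<and> hom00 F \<and> (\<forall>\<zeta>\<in>nullcone. F \<zeta> = f \<zeta>)"

text \<open>\<open>Q(f) = (\<Delta>^n F)|_\<N>\<close> for a (any) smooth homogeneous (0,0) extension F, n = CARD('n).\<close>
definition Qop :: "('n::finite cvec \<Rightarrow> real) \<Rightarrow> 'n cvec \<Rightarrow> complex" where
  "Qop f \<zeta> = (Lap ^^ CARD('n)) (\<lambda>z. complex_of_real ((SOME F. hom_ext f F) z)) \<zeta>"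

text \<open>\<open>u = O(L^k)\<close>: \<open>u = L^k h\<close> with h smooth on \<open>\<complex>^{n+1} \<setminus> {0}\<close>.\<close>
definition bigO_L :: "nat \<Rightarrow> ('n::finite cvec \<Rightarrow> complex) \<Rightarrow> bool" where
  "bigO_L k u \<longleftrightarrow> (\<exists>h. smooth_on punct h \<and> (\<forall>\<zeta>\<in>punct. u \<zeta> = complex_of_real (Lform \<zeta> ^ k) * h \<zeta>))"

end

theory Submission
  imports Defs
begin

lemma Ck_cont: "Ck k S f \<Longrightarrow> continuous_on S f"
  by (induction k arbitrary: f) (auto intro: differentiable_imp_continuous_on)

lemma Ck_Suc_mono: "Ck (Suc k) S f \<Longrightarrow> Ck k S f"
proof (induction k arbitrary: f)
  case 0 then show ?case by (auto intro: differentiable_imp_continuous_on)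
next
  case (Suc k) then show ?case by (metis Ck.simps(2))
qed

lemma Ck_mono: "Ck k S f \<Longrightarrow> m \<le> k \<Longrightarrow> Ck m S f"
proof (induction k)
  case 0 then show ?case by simp
next
  case (Suc k) then show ?case using Ck_Suc_mono le_Suc_eq by blast
qed

lemma Ck_SucD_deriv:
  assumes "open S" "Ck (Suc k) S f" "x \<in> S"
  shows "(f has_derivative frechet_derivative f (at x)) (at x)"
proof -
  have "f differentiable (at x within S)" using assms by (auto simp: differentiable_on_def)
  then have "f differentiable (at x)" using assms at_within_open by metis
  then show ?thesis using frechet_derivative_works by blast
qed

lemma Ck_SucD: "Ck (Suc k) S f \<Longrightarrow> Ck k S (\<lambda>x. frechet_derivative f (at x) v)"
  by simp

lemma Ck_deriv_cong:
  assumes "open S" "x \<in> S" "\<And>y. y \<in> S \<Longrightarrow> f y = g y" "f differentiable (at x)"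
  shows "frechet_derivative g (at x) = frechet_derivative f (at x)"
proof -
  have "(f has_derivative frechet_derivative f (at x)) (at x)" using assms(4) frechet_derivative_works by blast
  then have "(g has_derivative frechet_derivative f (at x)) (at x)"
    using has_derivative_transform_within_open assms(1-3) by blast
  then show ?thesis using frechet_derivative_at by metis
qed

lemma Ck_cong:
  assumes "open S" "Ck k S f" "\<And>x. x \<in> S \<Longrightarrow> f x = g x"
  shows "Ck k S g"
  using assms(2,3)
proof (induction k arbitrary: f g)
  case 0
  then have "continuous_on S f" by simp
  then show ?case using 0(2) continuous_on_cong[of S S f g] by simp
next
  case (Suc k)
  have d: "\<And>x. x \<in> S \<Longrightarrow> (f has_derivative frechet_derivative f (at x)) (at x)"
    using Ck_SucD_deriv[OF assms(1) Suc.prems(1)] by blast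
  have e: "frechet_derivative g (at x) = frechet_derivative f (at x)" if x: "x \<in> S" for x
    using Suc.prems(2) differentiableI[OF d[OF x]] by (intro Ck_deriv_cong[OF assms(1) x]) auto
  have "g differentiable_on S"
    unfolding differentiable_on_def
  proof
    fix x assume x: "x \<in> S"
    have "(g has_derivative frechet_derivative f (at x)) (at x)"
      using has_derivative_transform_within_open[OF d[OF x] assms(1) x Suc.prems(2)] .
    then show "g differentiable at x within S"
      by (meson differentiableI has_derivative_at_withinI)
  qed
  moreover have "\<And>v. Ck k S (\<lambda>x. frechet_derivative g (at x) v)"
  proof -
    fix v
    show "Ck k S (\<lambda>x. frechet_derivative g (at x) v)"
      by (rule Suc.IH[OF Ck_SucD[OF Suc.prems(1)]]) (simp add: e)
  qed
  ultimately show ?case by simp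
qed

lemma Ck_SucI:
  assumes "open S" "\<And>x. x \<in> S \<Longrightarrow> (f has_derivative f' x) (at x)"
    "\<And>v. Ck k S (\<lambda>x. f' x v)"
  shows "Ck (Suc k) S f"
proof -
  have dif: "f differentiable_on S"
    using assms(2) by (meson differentiableI differentiable_at_withinI differentiable_on_def)
  have eq: "\<And>x. x \<in> S \<Longrightarrow> frechet_derivative f (at x) = f' x"
    using assms(2) frechet_derivative_at by metis
  have "Ck k S (\<lambda>x. frechet_derivative f (at x) v)" for v
    by (rule Ck_cong[OF assms(1) assms(3)[of v]]) (simp add: eq)
  then show ?thesis using dif by simp
qed

lemma Ck_const: "open S \<Longrightarrow> Ck k S (\<lambda>x. c)"
proof (induction k arbitrary: c)
  case 0 then show ?case by simp
next
  case (Suc k)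
  show ?case
    by (rule Ck_SucI[where f'="\<lambda>x v. 0"]) (auto simp: Suc)
qed

lemma Ck_linear:
  assumes "open S" "bounded_linear l" "Ck k S f"
  shows "Ck k S (\<lambda>x. l (f x))"
  using assms(3)
proof (induction k arbitrary: f)
  case 0 then show ?case
    by (simp, intro continuous_on_compose2[of UNIV l S f]) (auto intro: linear_continuous_on assms(2))
next
  case (Suc k)
  show ?case
  proof (rule Ck_SucI[OF assms(1), where f'="\<lambda>x v. l (frechet_derivative f (at x) v)"])
    fix x assume "x \<in> S"
    then show "((\<lambda>x. l (f x)) has_derivative (\<lambda>v. l (frechet_derivative f (at x) v))) (at x)"
      using bounded_linear.has_derivative[OF assms(2) Ck_SucD_deriv[OF assms(1) Suc.prems]] by blast
  next
    fix v show "Ck k S (\<lambda>x. l (frechet_derivative f (at x) v))"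
      using Suc.IH Suc.prems by simp
  qed
qed

lemma Ck_add:
  assumes "open S" "Ck k S f" "Ck k S g"
  shows "Ck k S (\<lambda>x. f x + g x)"
  using assms(2,3)
proof (induction k arbitrary: f g)
  case 0 then show ?case by (simp add: continuous_on_add)
next
  case (Suc k)
  show ?case
  proof (rule Ck_SucI[OF assms(1), where f'="\<lambda>x v. frechet_derivative f (at x) v + frechet_derivative g (at x) v"])
    fix x assume "x \<in> S"
    then show "((\<lambda>x. f x + g x) has_derivative (\<lambda>v. frechet_derivative f (at x) v + frechet_derivative g (at x) v)) (at x)"
      using has_derivative_add Ck_SucD_deriv[OF assms(1) Suc.prems(1)] Ck_SucD_deriv[OF assms(1) Suc.prems(2)] by blast
  next
    fix v show "Ck k S (\<lambda>x. frechet_derivative f (at x) v + frechet_derivative g (at x) v)"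
      using Suc.IH Suc.prems by simp
  qed
qed

lemma Ck_neg: "open S \<Longrightarrow> Ck k S f \<Longrightarrow> Ck k S (\<lambda>x. - f x)"
  using Ck_linear[of S "\<lambda>x. - x"] bounded_linear_minus[OF bounded_linear_ident] by auto

lemma Ck_diff: "open S \<Longrightarrow> Ck k S f \<Longrightarrow> Ck k S g \<Longrightarrow> Ck k S (\<lambda>x. f x - g x)"
  using Ck_add[of S k f "\<lambda>x. - g x"] Ck_neg[of S k g] by simp

lemma Ck_sum:
  assumes "open S" "finite I" "\<And>i. i \<in> I \<Longrightarrow> Ck k S (f i)"
  shows "Ck k S (\<lambda>x. \<Sum>i\<in>I. f i x)"
  using assms(2,3)
proof (induction I rule: finite_induct)
  case empty then show ?case using Ck_const[OF assms(1)] by simp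
next
  case (insert a I) then show ?case by (auto intro!: Ck_add[OF assms(1)])
qed

lemma Ck_bilinear:
  assumes "open S" "bounded_bilinear bop" "Ck k S f" "Ck k S g"
  shows "Ck k S (\<lambda>x. bop (f x) (g x))"
  using assms(3,4)
proof (induction k arbitrary: f g)
  case 0 then show ?case
    using bounded_bilinear.continuous_on[OF assms(2)] by simp
next
  case (Suc k)
  note bb = bounded_bilinear.FDERIV[OF assms(2)]
  show ?case
  proof (rule Ck_SucI[OF assms(1), where f'="\<lambda>x v. bop (f x) (frechet_derivative g (at x) v) + bop (frechet_derivative f (at x) v) (g x)"])
    fix x assume "x \<in> S"
    then show "((\<lambda>x. bop (f x) (g x)) has_derivative (\<lambda>v. bop (f x) (frechet_derivative g (at x) v) + bop (frechet_derivative f (at x) v) (g x))) (at x)"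
      using bb Ck_SucD_deriv[OF assms(1) Suc.prems(1)] Ck_SucD_deriv[OF assms(1) Suc.prems(2)] by blast
  next
    fix v
    have f: "Ck k S f" "Ck k S g" using Suc.prems Ck_Suc_mono by blast+
    show "Ck k S (\<lambda>x. bop (f x) (frechet_derivative g (at x) v) + bop (frechet_derivative f (at x) v) (g x))"
      by (rule Ck_add[OF assms(1)]) (use Suc.IH Suc.prems f in auto)
  qed
qed

lemma Ck_mult: "open S \<Longrightarrow> Ck k S f \<Longrightarrow> Ck k S g \<Longrightarrow> Ck k S (\<lambda>x. f x * g x :: 'a::real_normed_algebra)"
  using Ck_bilinear[OF _ bounded_bilinear_mult] by blast

lemma Ck_scaleR: "open S \<Longrightarrow> Ck k S f \<Longrightarrow> Ck k S g \<Longrightarrow> Ck k S (\<lambda>x. f x *\<^sub>R g x)"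
  using Ck_bilinear[OF _ bounded_bilinear_scaleR] by blast

lemma Ck_inner: "open S \<Longrightarrow> Ck k S f \<Longrightarrow> Ck k S g \<Longrightarrow> Ck k S (\<lambda>x. inner (f x) (g x :: 'c::real_inner))"
  using Ck_bilinear[OF _ bounded_bilinear_inner] by blast

lemma blin_expand:
  fixes l :: "'c::euclidean_space \<Rightarrow> 'd::real_normed_vector"
  assumes "linear l"
  shows "l y = (\<Sum>b\<in>Basis. (y \<bullet> b) *\<^sub>R l b)"
proof -
  have "l y = l (\<Sum>b\<in>Basis. (y \<bullet> b) *\<^sub>R b)" by (simp add: euclidean_representation)
  also have "\<dots> = (\<Sum>b\<in>Basis. (y \<bullet> b) *\<^sub>R l b)"
    by (simp add: linear_sum[OF assms] linear_scale[OF assms])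
  finally show ?thesis .
qed

lemma Ck_compose:
  fixes \<phi> :: "'a::real_normed_vector \<Rightarrow> 'c::euclidean_space" and g :: "'c \<Rightarrow> 'b::real_normed_vector"
  assumes "open S" "open T" "\<phi> ` S \<subseteq> T" "Ck k S \<phi>" "Ck k T g"
  shows "Ck k S (\<lambda>x. g (\<phi> x))"
  using assms(4,5)
proof (induction k arbitrary: g)
  case 0 then show ?case using continuous_on_compose2[of T g S \<phi>] assms(3) by simp
next
  case (Suc k)
  let ?D = "\<lambda>x v. \<Sum>b\<in>Basis. (frechet_derivative \<phi> (at x) v \<bullet> b) *\<^sub>R frechet_derivative g (at (\<phi> x)) b"
  show ?case
  proof (rule Ck_SucI[OF assms(1), where f'="?D"])
    fix x assume x: "x \<in> S"
    have "((\<lambda>x. g (\<phi> x)) has_derivative (\<lambda>v. frechet_derivative g (at (\<phi> x)) (frechet_derivative \<phi> (at x) v))) (at x)"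
      using has_derivative_compose[OF Ck_SucD_deriv[OF assms(1) Suc.prems(1) x] Ck_SucD_deriv[OF assms(2) Suc.prems(2)]] x assms(3) by blast
    moreover have "linear (frechet_derivative g (at (\<phi> x)))"
      using Ck_SucD_deriv[OF assms(2) Suc.prems(2)] x assms(3) has_derivative_linear by blast
    then have e: "\<And>v. frechet_derivative g (at (\<phi> x)) (frechet_derivative \<phi> (at x) v) = ?D x v"
      using blin_expand by blast
    ultimately show "((\<lambda>x. g (\<phi> x)) has_derivative (\<lambda>v. ?D x v)) (at x)"
      by (simp only: e)
  next
    fix v
    have p: "Ck k S \<phi>" using Suc.prems Ck_Suc_mono by blast
    show "Ck k S (\<lambda>x. ?D x v)"
    proof (rule Ck_sum[OF assms(1) finite_Basis])
      fix b :: 'c assume "b \<in> Basis"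
      show "Ck k S (\<lambda>x. (frechet_derivative \<phi> (at x) v \<bullet> b) *\<^sub>R frechet_derivative g (at (\<phi> x)) b)"
      proof (rule Ck_scaleR[OF assms(1)])
        show "Ck k S (\<lambda>x. frechet_derivative \<phi> (at x) v \<bullet> b)"
          using Ck_linear[OF assms(1) bounded_linear_inner_left Ck_SucD[OF Suc.prems(1)]] .
        show "Ck k S (\<lambda>x. frechet_derivative g (at (\<phi> x)) b)"
          using Suc.IH[OF p Ck_SucD[OF Suc.prems(2)]] .
      qed
    qed
  qed
qed

lemma Ck_inverse: "Ck k (-{0}) (inverse :: 'a::real_normed_field \<Rightarrow> 'a)"
proof (induction k)
  case 0 then show ?case by (simp add: continuous_on_inverse continuous_on_id)
next
  case (Suc k)
  have o: "open (-{0::'a})" by auto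
  show ?case
  proof (rule Ck_SucI[OF o, where f'="\<lambda>x v. - (inverse x * v * inverse x)"])
    fix x :: 'a assume "x \<in> -{0}"
    then show "(inverse has_derivative (\<lambda>v. - (inverse x * v * inverse x))) (at x)"
      using has_derivative_inverse' by auto
  next
    fix v :: 'a
    have "Ck k (-{0}) (\<lambda>x. inverse x * v)"
      using Ck_mult[OF o, of k inverse "\<lambda>x. v"] Suc Ck_const[OF o, of k v] by simp
    then have "Ck k (-{0}) (\<lambda>x. inverse x * v * inverse x)"
      using Ck_mult[OF o, of k "\<lambda>x. inverse x * v" inverse] Suc by simp
    then show "Ck k (-{0}) (\<lambda>x. - (inverse x * v * inverse x))"
      using Ck_neg[OF o] by blast
  qed
qed

lemma Ck_sqrt: "Ck k {0<..} (sqrt :: real \<Rightarrow> real)"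
proof (induction k)
  case 0 then show ?case by (simp add: continuous_on_real_sqrt continuous_on_id)
next
  case (Suc k)
  have o: "open {0::real<..}" by auto
  show ?case
  proof (rule Ck_SucI[OF o, where f'="\<lambda>x. (*) (inverse (sqrt x) / 2)"])
    fix x :: real assume "x \<in> {0<..}"
    then have "0 < x" by simp
    from DERIV_real_sqrt[OF this] show "(sqrt has_derivative (*) (inverse (sqrt x) / 2)) (at x)"
      unfolding has_field_derivative_def .
  next
    fix v
    have "Ck k {0<..} (\<lambda>x. inverse (sqrt x))"
      by (rule Ck_compose[OF o _ _ Suc Ck_inverse]) auto
    then have "Ck k {0<..} (\<lambda>x::real. inverse (sqrt x) * (v / 2))"
      using Ck_mult[OF o _ Ck_const[OF o, of k "v/2"]] by blast
    then show "Ck k {0<..} (\<lambda>x::real. inverse (sqrt x) / 2 * v)"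
      by simp
  qed
qed

lemma Ck_subset: "Ck k S f \<Longrightarrow> U \<subseteq> S \<Longrightarrow> Ck k U f"
proof (induction k arbitrary: f)
  case 0 then show ?case using continuous_on_subset by auto
next
  case (Suc k) then show ?case using differentiable_on_subset by auto
qed

lemma Ck_local:
  assumes "open S" "\<And>x. x \<in> S \<Longrightarrow> \<exists>U. open U \<and> x \<in> U \<and> U \<subseteq> S \<and> Ck k U f"
  shows "Ck k S f"
  using assms(2)
proof (induction k arbitrary: f)
  case 0
  have "continuous (at x) f" if x: "x \<in> S" for x
  proof -
    obtain U where U: "open U" "x \<in> U" "Ck 0 U f" using 0 x by blast
    then show ?thesis using continuous_on_eq_continuous_at by auto
  qed
  then show ?case unfolding Ck.simps continuous_on_eq_continuous_at[OF assms(1)] by blast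
next
  case (Suc k)
  show ?case
  proof (rule Ck_SucI[OF assms(1), where f'="\<lambda>x. frechet_derivative f (at x)"])
    fix x assume x: "x \<in> S"
    obtain U where U: "open U" "x \<in> U" "Ck (Suc k) U f" using Suc.prems x by blast
    show "(f has_derivative frechet_derivative f (at x)) (at x)"
      using Ck_SucD_deriv[OF U(1) U(3) U(2)] .
  next
    fix v
    show "Ck k S (\<lambda>x. frechet_derivative f (at x) v)"
    proof (rule Suc.IH)
      fix x assume x: "x \<in> S"
      obtain U where U: "open U" "x \<in> U" "U \<subseteq> S" "Ck (Suc k) U f" using Suc.prems x by blast
      then show "\<exists>U. open U \<and> x \<in> U \<and> U \<subseteq> S \<and> Ck k U (\<lambda>x. frechet_derivative f (at x) v)"
        by auto
    qed
  qed
qed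

lemma smooth_Ck: "smooth_on S f \<Longrightarrow> Ck k S f"
  by (simp add: smooth_on_def)

lemma smooth_onI: "(\<And>k. Ck k S f) \<Longrightarrow> smooth_on S f"
  by (simp add: smooth_on_def)

lemma smooth_const: "open S \<Longrightarrow> smooth_on S (\<lambda>x. c)"
  by (simp add: smooth_on_def Ck_const)

lemma smooth_cong: "open S \<Longrightarrow> smooth_on S f \<Longrightarrow> (\<And>x. x \<in> S \<Longrightarrow> f x = g x) \<Longrightarrow> smooth_on S g"
  by (meson Ck_cong smooth_on_def)

lemma smooth_linear: "open S \<Longrightarrow> bounded_linear l \<Longrightarrow> smooth_on S f \<Longrightarrow> smooth_on S (\<lambda>x. l (f x))"
  by (simp add: smooth_on_def Ck_linear)

lemma smooth_add: "open S \<Longrightarrow> smooth_on S f \<Longrightarrow> smooth_on S g \<Longrightarrow> smooth_on S (\<lambda>x. f x + g x)"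
  by (simp add: smooth_on_def Ck_add)

lemma smooth_diff: "open S \<Longrightarrow> smooth_on S f \<Longrightarrow> smooth_on S g \<Longrightarrow> smooth_on S (\<lambda>x. f x - g x)"
  by (simp add: smooth_on_def Ck_diff)

lemma smooth_neg: "open S \<Longrightarrow> smooth_on S f \<Longrightarrow> smooth_on S (\<lambda>x. - f x)"
  by (simp add: smooth_on_def Ck_neg)

lemma smooth_sum: "open S \<Longrightarrow> finite I \<Longrightarrow> (\<And>i. i \<in> I \<Longrightarrow> smooth_on S (f i)) \<Longrightarrow> smooth_on S (\<lambda>x. \<Sum>i\<in>I. f i x)"
  by (simp add: smooth_on_def Ck_sum)

lemma smooth_bilinear: "open S \<Longrightarrow> bounded_bilinear bop \<Longrightarrow> smooth_on S f \<Longrightarrow> smooth_on S g \<Longrightarrow> smooth_on S (\<lambda>x. bop (f x) (g x))"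
  by (simp add: smooth_on_def Ck_bilinear)

lemma smooth_mult: "open S \<Longrightarrow> smooth_on S f \<Longrightarrow> smooth_on S g \<Longrightarrow> smooth_on S (\<lambda>x. f x * g x :: 'a::real_normed_algebra)"
  by (simp add: smooth_on_def Ck_mult)

lemma smooth_scaleR: "open S \<Longrightarrow> smooth_on S f \<Longrightarrow> smooth_on S g \<Longrightarrow> smooth_on S (\<lambda>x. f x *\<^sub>R g x)"
  by (simp add: smooth_on_def Ck_scaleR)

lemma smooth_inner: "open S \<Longrightarrow> smooth_on S f \<Longrightarrow> smooth_on S g \<Longrightarrow> smooth_on S (\<lambda>x. inner (f x) (g x :: 'c::real_inner))"
  by (simp add: smooth_on_def Ck_inner)

lemma smooth_compose:
  fixes \<phi> :: "'a::real_normed_vector \<Rightarrow> 'c::euclidean_space" and g :: "'c \<Rightarrow> 'b::real_normed_vector"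
  shows "open S \<Longrightarrow> open T \<Longrightarrow> \<phi> ` S \<subseteq> T \<Longrightarrow> smooth_on S \<phi> \<Longrightarrow> smooth_on T g \<Longrightarrow> smooth_on S (\<lambda>x. g (\<phi> x))"
  by (simp add: smooth_on_def Ck_compose)

lemma smooth_inverse: "smooth_on (-{0}) (inverse :: 'a::real_normed_field \<Rightarrow> 'a)"
  by (simp add: smooth_on_def Ck_inverse)

lemma smooth_sqrt: "smooth_on {0<..} (sqrt :: real \<Rightarrow> real)"
  by (simp add: smooth_on_def Ck_sqrt)

lemma smooth_subset: "smooth_on S f \<Longrightarrow> U \<subseteq> S \<Longrightarrow> smooth_on U f"
  by (meson Ck_subset smooth_on_def)

lemma smooth_local:
  "open S \<Longrightarrow> (\<And>x. x \<in> S \<Longrightarrow> \<exists>U. open U \<and> x \<in> U \<and> U \<subseteq> S \<and> smooth_on U f) \<Longrightarrow> smooth_on S f"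
  by (metis Ck_local smooth_on_def)

lemma smooth_deriv:
  "open S \<Longrightarrow> smooth_on S f \<Longrightarrow> smooth_on S (\<lambda>x. frechet_derivative f (at x) v)"
  by (metis Ck.simps(2) smooth_on_def)

lemma smooth_has_derivative:
  "open S \<Longrightarrow> smooth_on S f \<Longrightarrow> x \<in> S \<Longrightarrow> (f has_derivative frechet_derivative f (at x)) (at x)"
  using Ck_SucD_deriv smooth_on_def by blast

lemma Ck_id: "open S \<Longrightarrow> Ck k S (\<lambda>x. x)"
proof (induction k)
  case 0 then show ?case by (simp add: continuous_on_id)
next
  case (Suc k)
  show ?case by (rule Ck_SucI[OF Suc.prems, where f'="\<lambda>x v. v"]) (auto simp: Ck_const[OF Suc.prems])
qed

lemma smooth_id: "open S \<Longrightarrow> smooth_on S (\<lambda>x. x)"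
  by (simp add: smooth_on_def Ck_id)


definition eps :: "'n option \<Rightarrow> complex" where
  "eps i = (case i of None \<Rightarrow> 1 | Some _ \<Rightarrow> -1)"

lemma eps_sq[simp]: "eps i * eps i = 1"
  by (cases i) (auto simp: eps_def)

lemma eps_nz[simp]: "eps i \<noteq> 0"
  by (cases i) (auto simp: eps_def)

lemma sum_option: "(\<Sum>i\<in>(UNIV::'n::finite option set). f i) = f None + (\<Sum>j\<in>UNIV. f (Some j))"
proof -
  have U: "(UNIV::'n option set) = insert None (range Some)"
    by (metis UNIV_option_conv)
  have "(\<Sum>i\<in>(UNIV::'n option set). f i) = f None + sum f (range Some)"
    unfolding U by (subst sum.insert) auto
  also have "sum f (range Some) = (\<Sum>j\<in>UNIV. f (Some j))"
    by (subst sum.reindex) (auto simp: inj_on_def)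
  finally show ?thesis .
qed

definition Lc :: "'n::finite cvec \<Rightarrow> complex" where
  "Lc z = complex_of_real (Lform z)"

lemma Lc_sum: "Lc z = (\<Sum>i\<in>UNIV. eps i * (z $ i * cnj (z $ i)))"
proof -
  have "Lc z = of_real ((cmod (z $ None))\<^sup>2) - (\<Sum>j\<in>UNIV. of_real ((cmod (z $ Some j))\<^sup>2))"
    by (simp add: Lc_def Lform_def)
  also have "\<dots> = (\<Sum>i\<in>UNIV. eps i * (z $ i * cnj (z $ i)))"
    by (simp add: sum_option eps_def complex_norm_square[symmetric] sum_negf)
  finally show ?thesis .
qed

lemma Lap_eps: "Lap F z = (\<Sum>i\<in>UNIV. eps i * dz i (dzbar i F) z)"
  by (simp add: Lap_def sum_option eps_def sum_negf)

lemma axis_decomp: "axis j l = Re l *\<^sub>R axis j 1 + Im l *\<^sub>R axis j \<i>"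
  by (simp add: vec_eq_iff axis_def complex_eq_iff)

lemma dz_at: "(G has_derivative G') (at z) \<Longrightarrow> dz j G z = (G' (axis j 1) - \<i> * G' (axis j \<i>)) / 2"
  by (simp add: dz_def dx_def dy_def frechet_derivative_at[symmetric])

lemma dzbar_at: "(G has_derivative G') (at z) \<Longrightarrow> dzbar j G z = (G' (axis j 1) + \<i> * G' (axis j \<i>)) / 2"
  by (simp add: dzbar_def dx_def dy_def frechet_derivative_at[symmetric])

lemma deriv_axis:
  assumes "(G has_derivative G') (at z)"
  shows "G' (axis j l) = l * dz j G z + cnj l * dzbar j G z"
proof -
  have lin: "linear G'" using assms has_derivative_linear by blast
  have "G' (axis j l) = Re l *\<^sub>R G' (axis j 1) + Im l *\<^sub>R G' (axis j \<i>)"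
    by (subst axis_decomp) (simp add: linear_add[OF lin] linear_scale[OF lin])
  also have "\<dots> = l * dz j G z + cnj l * dzbar j G z"
    unfolding dz_at[OF assms] dzbar_at[OF assms]
    by (cases l) (simp add: scaleR_conv_of_real Complex_eq field_simps)
  finally show ?thesis .
qed

lemma vec_axis_sum: "(\<Sum>i\<in>UNIV. axis i (v $ i)) = (v :: 'a::comm_monoid_add ^ 'm::finite)"
  by (simp add: vec_eq_iff axis_def sum.delta)

lemma deriv_expand:
  assumes "(G has_derivative G') (at z)"
  shows "G' v = (\<Sum>i\<in>UNIV. v $ i * dz i G z + cnj (v $ i) * dzbar i G z)"
proof -
  have lin: "linear G'" using assms has_derivative_linear by blast
  have "G' v = G' (\<Sum>i\<in>UNIV. axis i (v $ i))" by (simp add: vec_axis_sum)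
  also have "\<dots> = (\<Sum>i\<in>UNIV. G' (axis i (v $ i)))" by (simp add: linear_sum[OF lin])
  finally show ?thesis using deriv_axis[OF assms] by simp
qed

lemma smooth_differentiable: "open S \<Longrightarrow> smooth_on S G \<Longrightarrow> z \<in> S \<Longrightarrow> G differentiable (at z)"
  using smooth_has_derivative differentiableI by blast

lemma diffD: "G differentiable (at z) \<Longrightarrow> (G has_derivative frechet_derivative G (at z)) (at z)"
  using frechet_derivative_works by blast

lemma dz_add:
  assumes "G1 differentiable (at z)" "G2 differentiable (at z)"
  shows "dz j (\<lambda>x. G1 x + G2 x) z = dz j G1 z + dz j G2 z"
    "dzbar j (\<lambda>x. G1 x + G2 x) z = dzbar j G1 z + dzbar j G2 z"
  using has_derivative_add[OF diffD[OF assms(1)] diffD[OF assms(2)]]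
  by (simp_all add: dz_at dzbar_at dz_at[OF diffD[OF assms(1)]] dz_at[OF diffD[OF assms(2)]]
      dzbar_at[OF diffD[OF assms(1)]] dzbar_at[OF diffD[OF assms(2)]] field_simps)

lemma dz_diff:
  assumes "G1 differentiable (at z)" "G2 differentiable (at z)"
  shows "dz j (\<lambda>x. G1 x - G2 x) z = dz j G1 z - dz j G2 z"
    "dzbar j (\<lambda>x. G1 x - G2 x) z = dzbar j G1 z - dzbar j G2 z"
  using has_derivative_diff[OF diffD[OF assms(1)] diffD[OF assms(2)]]
  by (simp_all add: dz_at dzbar_at dz_at[OF diffD[OF assms(1)]] dz_at[OF diffD[OF assms(2)]]
      dzbar_at[OF diffD[OF assms(1)]] dzbar_at[OF diffD[OF assms(2)]] field_simps)

lemma dz_mult: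
  assumes "G1 differentiable (at z)" "G2 differentiable (at z)"
  shows "dz j (\<lambda>x. G1 x * G2 x) z = dz j G1 z * G2 z + G1 z * dz j G2 z"
    "dzbar j (\<lambda>x. G1 x * G2 x) z = dzbar j G1 z * G2 z + G1 z * dzbar j G2 z"
  using has_derivative_mult[OF diffD[OF assms(1)] diffD[OF assms(2)]]
  by (simp_all add: dz_at dzbar_at dz_at[OF diffD[OF assms(1)]] dz_at[OF diffD[OF assms(2)]]
      dzbar_at[OF diffD[OF assms(1)]] dzbar_at[OF diffD[OF assms(2)]] field_simps)

lemma dz_const:
  shows "dz j (\<lambda>x. c) z = 0" "dzbar j (\<lambda>x. c) z = 0"
  by (simp_all add: dz_at[OF has_derivative_const] dzbar_at[OF has_derivative_const])

lemma dz_cmult: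
  assumes "G differentiable (at z)"
  shows "dz j (\<lambda>x. c * G x) z = c * dz j G z" "dzbar j (\<lambda>x. c * G x) z = c * dzbar j G z"
  using dz_mult[OF differentiable_const assms, of j c] by (simp_all add: dz_const)

lemma dz_sum:
  assumes "finite I" "\<And>i. i \<in> I \<Longrightarrow> G i differentiable (at z)"
  shows "dz j (\<lambda>x. \<Sum>i\<in>I. G i x) z = (\<Sum>i\<in>I. dz j (G i) z)"
    "dzbar j (\<lambda>x. \<Sum>i\<in>I. G i x) z = (\<Sum>i\<in>I. dzbar j (G i) z)"
proof -
  have d: "((\<lambda>x. \<Sum>i\<in>I. G i x) has_derivative (\<lambda>h. \<Sum>i\<in>I. frechet_derivative (G i) (at z) h)) (at z)"
    by (rule has_derivative_sum) (use assms diffD in blast)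
  have e1: "(\<Sum>i\<in>I. dz j (G i) z) = (\<Sum>i\<in>I. (frechet_derivative (G i) (at z) (axis j 1) - \<i> * frechet_derivative (G i) (at z) (axis j \<i>)) / 2)"
    by (rule sum.cong) (auto simp: dz_at[OF diffD[OF assms(2)]])
  have e2: "(\<Sum>i\<in>I. dzbar j (G i) z) = (\<Sum>i\<in>I. (frechet_derivative (G i) (at z) (axis j 1) + \<i> * frechet_derivative (G i) (at z) (axis j \<i>)) / 2)"
    by (rule sum.cong) (auto simp: dzbar_at[OF diffD[OF assms(2)]])
  show "dz j (\<lambda>x. \<Sum>i\<in>I. G i x) z = (\<Sum>i\<in>I. dz j (G i) z)"
    unfolding e1 dz_at[OF d] by (simp add: sum_subtractf sum_divide_distrib sum_distrib_left diff_divide_distrib)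
  show "dzbar j (\<lambda>x. \<Sum>i\<in>I. G i x) z = (\<Sum>i\<in>I. dzbar j (G i) z)"
    unfolding e2 dzbar_at[OF d] by (simp add: sum.distrib sum_divide_distrib sum_distrib_left add_divide_distrib)
qed

lemma has_derivative_coord: "((\<lambda>x. x $ i) has_derivative (\<lambda>h. h $ i)) (at z)"
  using bounded_linear_vec_nth bounded_linear_imp_has_derivative by blast

lemma has_derivative_cnj_coord: "((\<lambda>x. cnj (x $ i)) has_derivative (\<lambda>h. cnj (h $ i))) (at z)"
  using bounded_linear_imp_has_derivative bounded_linear_compose[OF bounded_linear_cnj bounded_linear_vec_nth] by blast

lemma dz_coord:
  "dz j (\<lambda>x. x $ i) z = (if i = j then 1 else 0)"
  "dzbar j (\<lambda>x. x $ i) z = 0"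
  "dz j (\<lambda>x. cnj (x $ i)) z = 0"
  "dzbar j (\<lambda>x. cnj (x $ i)) z = (if i = j then 1 else 0)"
  by (simp_all add: dz_at[OF has_derivative_coord] dzbar_at[OF has_derivative_coord]
      dz_at[OF has_derivative_cnj_coord] dzbar_at[OF has_derivative_cnj_coord] axis_def)

lemma differentiable_coord: "(\<lambda>x. x $ i) differentiable (at z)" "(\<lambda>x. cnj (x $ i)) differentiable (at z)"
  using has_derivative_coord has_derivative_cnj_coord differentiableI by blast+

lemma dz_cong:
  assumes "open S" "z \<in> S" "\<And>x. x \<in> S \<Longrightarrow> G1 x = G2 x" "G1 differentiable (at z)"
  shows "dz j G2 z = dz j G1 z" "dzbar j G2 z = dzbar j G1 z"
  using Ck_deriv_cong[OF assms] by (simp_all add: dz_def dzbar_def dx_def dy_def)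

lemma bl_div2: "bounded_linear (\<lambda>x::complex. x / 2)"
  by (simp add: bounded_linear_divide bounded_linear_ident)

lemma smooth_dz:
  assumes "open S" "smooth_on S G"
  shows "smooth_on S (dz j G)" "smooth_on S (dzbar j G)"
proof -
  have a: "smooth_on S (\<lambda>z. frechet_derivative G (at z) (axis j 1))"
       "smooth_on S (\<lambda>z. \<i> * frechet_derivative G (at z) (axis j \<i>))"
    using smooth_deriv[OF assms] smooth_mult[OF assms(1) smooth_const[OF assms(1)]] by blast+
  have "smooth_on S (\<lambda>z. (frechet_derivative G (at z) (axis j 1) - \<i> * frechet_derivative G (at z) (axis j \<i>)) / 2)"
    by (rule smooth_linear[OF assms(1) bl_div2]) (rule smooth_diff[OF assms(1) a])
  moreover have "dz j G = (\<lambda>z. (frechet_derivative G (at z) (axis j 1) - \<i> * frechet_derivative G (at z) (axis j \<i>)) / 2)"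
    by (simp add: fun_eq_iff dz_def dx_def dy_def)
  ultimately show "smooth_on S (dz j G)" by simp
  have "smooth_on S (\<lambda>z. (frechet_derivative G (at z) (axis j 1) + \<i> * frechet_derivative G (at z) (axis j \<i>)) / 2)"
    by (rule smooth_linear[OF assms(1) bl_div2]) (rule smooth_add[OF assms(1) a])
  moreover have "dzbar j G = (\<lambda>z. (frechet_derivative G (at z) (axis j 1) + \<i> * frechet_derivative G (at z) (axis j \<i>)) / 2)"
    by (simp add: fun_eq_iff dzbar_def dx_def dy_def)
  ultimately show "smooth_on S (dzbar j G)" by simp
qed

lemma smooth_Lap:
  assumes "open S" "smooth_on S G"
  shows "smooth_on S (Lap G)"
proof -
  have "smooth_on S (\<lambda>z. \<Sum>i\<in>UNIV. eps i * dz i (dzbar i G) z)"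
    by (intro smooth_sum[OF assms(1)] smooth_mult[OF assms(1)] smooth_const[OF assms(1)]
        smooth_dz[OF assms(1)] assms(2)) auto
  moreover have "Lap G = (\<lambda>z. \<Sum>i\<in>UNIV. eps i * dz i (dzbar i G) z)"
    by (simp add: fun_eq_iff Lap_eps)
  ultimately show ?thesis by simp
qed

lemma smooth_coord: "open S \<Longrightarrow> smooth_on S (\<lambda>x. x $ i)" "open S \<Longrightarrow> smooth_on S (\<lambda>x. cnj (x $ i))"
  using smooth_linear[OF _ bounded_linear_vec_nth smooth_id]
    smooth_linear[OF _ bounded_linear_compose[OF bounded_linear_cnj bounded_linear_vec_nth] smooth_id] by auto

lemma Lc_fun: "Lc = (\<lambda>z. \<Sum>i\<in>UNIV. eps i * (z $ i * cnj (z $ i)))"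
  by (simp add: fun_eq_iff Lc_sum)

lemma smooth_Lc: "open S \<Longrightarrow> smooth_on S Lc"
  unfolding Lc_fun
  by (intro smooth_sum smooth_mult smooth_const smooth_coord) auto

lemma differentiable_Lc: "Lc differentiable (at z)"
  using smooth_differentiable[OF open_UNIV smooth_Lc[OF open_UNIV]] by simp

lemma sum_delta_ob: "(\<Sum>i\<in>(UNIV::'m::finite set). a i * (of_bool (i = j) * b i)) = a j * (b j :: 'a::comm_ring_1)"
proof -
  have "(\<Sum>i\<in>(UNIV::'m set). a i * (of_bool (i = j) * b i)) = (\<Sum>i\<in>UNIV. if i = j then a j * b j else 0)"
    by (rule sum.cong) auto
  then show ?thesis by simp
qed

lemma sum_delta_ob2: "(\<Sum>i\<in>(UNIV::'m::finite set). a i * (b i * of_bool (i = j))) = a j * (b j :: 'a::comm_ring_1)"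
  using sum_delta_ob[of a j b] by (simp add: mult.commute)

lemma dz_Lc: "dz j Lc z = eps j * cnj (z $ j)" "dzbar j Lc z = eps j * z $ j"
proof -
  have d: "(\<lambda>x. eps i * (x $ i * cnj (x $ i))) differentiable (at z)" for i
    by (intro differentiable_mult differentiable_const differentiable_coord)
  have d2: "(\<lambda>x. x $ i * cnj (x $ i)) differentiable (at z)" for i
    by (intro differentiable_mult differentiable_coord)
  show "dz j Lc z = eps j * cnj (z $ j)"
    unfolding Lc_fun dz_sum(1)[OF finite_class.finite_UNIV d] dz_cmult(1)[OF d2] dz_mult(1)[OF differentiable_coord]
    by (simp add: dz_coord of_bool_def[symmetric] sum_delta_ob sum_delta_ob2)
  show "dzbar j Lc z = eps j * z $ j"
    unfolding Lc_fun dz_sum(2)[OF finite_class.finite_UNIV d] dz_cmult(2)[OF d2] dz_mult(2)[OF differentiable_coord]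
    by (simp add: dz_coord of_bool_def[symmetric] sum_delta_ob sum_delta_ob2)
qed

lemma dz_fun_cong:
  assumes "open S" "z \<in> S" "\<And>x. x \<in> S \<Longrightarrow> G x = H x" "smooth_on S H"
  shows "dz j G z = dz j H z" "dzbar j G z = dzbar j H z"
  using dz_cong[OF assms(1,2), of H G] assms(3,4) smooth_differentiable[OF assms(1) assms(4) assms(2)] by auto

lemma Lap_cong:
  assumes "open S" "z \<in> S" "\<And>x. x \<in> S \<Longrightarrow> G x = H x" "smooth_on S H"
  shows "Lap G z = Lap H z"
proof -
  have "dz i (dzbar i G) z = dz i (dzbar i H) z" for i
    by (rule dz_fun_cong[OF assms(1,2)]) (use dz_fun_cong[OF assms(1) _ assms(3,4)] smooth_dz[OF assms(1,4)] in auto)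
  then show ?thesis by (simp add: Lap_eps)
qed

lemma Lap_add:
  assumes "open S" "z \<in> S" "smooth_on S G1" "smooth_on S G2"
  shows "Lap (\<lambda>x. G1 x + G2 x) z = Lap G1 z + Lap G2 z"
proof -
  have "dz i (dzbar i (\<lambda>x. G1 x + G2 x)) z = dz i (dzbar i G1) z + dz i (dzbar i G2) z" for i
  proof -
    have "dz i (dzbar i (\<lambda>x. G1 x + G2 x)) z = dz i (\<lambda>x. dzbar i G1 x + dzbar i G2 x) z"
      by (rule dz_fun_cong[OF assms(1,2)])
         (auto intro!: dz_add smooth_add smooth_dz assms smooth_differentiable[OF assms(1)])
    also have "\<dots> = dz i (dzbar i G1) z + dz i (dzbar i G2) z"
      by (intro dz_add smooth_differentiable[OF assms(1) _ assms(2)] smooth_dz assms)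
    finally show ?thesis .
  qed
  then show ?thesis by (simp add: Lap_eps sum.distrib algebra_simps)
qed

lemma Lap_cmult:
  assumes "open S" "z \<in> S" "smooth_on S G"
  shows "Lap (\<lambda>x. c * G x) z = c * Lap G z"
proof -
  have "dz i (dzbar i (\<lambda>x. c * G x)) z = c * dz i (dzbar i G) z" for i
  proof -
    have "dz i (dzbar i (\<lambda>x. c * G x)) z = dz i (\<lambda>x. c * dzbar i G x) z"
      by (rule dz_fun_cong[OF assms(1,2)])
         (auto intro!: dz_cmult smooth_mult smooth_const smooth_dz assms smooth_differentiable[OF assms(1)])
    also have "\<dots> = c * dz i (dzbar i G) z"
      by (intro dz_cmult smooth_differentiable[OF assms(1) _ assms(2)] smooth_dz assms)
    finally show ?thesis .
  qed
  then show ?thesis by (simp add: Lap_eps sum_distrib_left algebra_simps)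
qed

lemma Lap_diff:
  assumes "open S" "z \<in> S" "smooth_on S G1" "smooth_on S G2"
  shows "Lap (\<lambda>x. G1 x - G2 x) z = Lap G1 z - Lap G2 z"
proof -
  have s: "smooth_on S (\<lambda>x. (-1) * G2 x)" by (intro smooth_mult smooth_const assms)
  have "Lap (\<lambda>x. G1 x - G2 x) z = Lap (\<lambda>x. G1 x + (-1) * G2 x) z" by simp
  also have "\<dots> = Lap G1 z + Lap (\<lambda>x. (-1) * G2 x) z" by (rule Lap_add[OF assms(1,2,3) s])
  also have "\<dots> = Lap G1 z - Lap G2 z" using Lap_cmult[OF assms(1,2,4), of "-1"] by simp
  finally show ?thesis .
qed


definition homg :: "int \<Rightarrow> int \<Rightarrow> ('n::finite cvec \<Rightarrow> complex) \<Rightarrow> bool" where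
  "homg p q w \<longleftrightarrow> (\<forall>z c. z \<noteq> 0 \<and> c \<noteq> 0 \<longrightarrow> w (c *s z) = c powi p * cnj c powi q * w z)"

lemma open_punct: "open (punct :: 'n::finite cvec set)"
  unfolding punct_def by (intro open_Compl closed_singleton)

lemma in_punct: "z \<in> punct \<longleftrightarrow> z \<noteq> 0"
  by (simp add: punct_def)

lemma smult_nz: "c \<noteq> 0 \<Longrightarrow> z \<noteq> 0 \<Longrightarrow> c *s z \<noteq> (0::'n::finite cvec)"
  by (auto simp: vec_eq_iff)

lemma bl_smult_left: "bounded_linear (\<lambda>x::'n::finite cvec. c *s x)"
proof -
  have "linear (\<lambda>x::'n::finite cvec. c *s x)"
    by (rule linearI) (auto simp: vec_eq_iff mult_scaleR_right algebra_simps)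
  then show ?thesis using linear_conv_bounded_linear by blast
qed

lemma bl_smult_right: "bounded_linear (\<lambda>c::complex. c *s (z::'n::finite cvec))"
proof -
  have "linear (\<lambda>c::complex. c *s (z::'n::finite cvec))"
    by (rule linearI) (auto simp: vec_eq_iff algebra_simps)
  then show ?thesis using linear_conv_bounded_linear by blast
qed

lemma homg_deriv_scale:
  assumes w: "smooth_on punct w" "homg p q w" and z: "z \<in> punct" and c: "c \<noteq> 0"
  shows "frechet_derivative w (at (c *s z)) (c *s v) = c powi p * cnj c powi q * frechet_derivative w (at z) v"
proof -
  let ?K = "c powi p * cnj c powi q"
  have cz: "c *s z \<in> punct" using z c smult_nz by (auto simp: in_punct)
  have d1: "((\<lambda>x. w (c *s x)) has_derivative (\<lambda>v. frechet_derivative w (at (c *s z)) (c *s v))) (at z)"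
    using has_derivative_compose[OF bounded_linear_imp_has_derivative[OF bl_smult_left]
        smooth_has_derivative[OF open_punct w(1) cz]] .
  have d2: "((\<lambda>x. ?K * w x) has_derivative (\<lambda>v. ?K * frechet_derivative w (at z) v)) (at z)"
    using has_derivative_mult[OF has_derivative_const smooth_has_derivative[OF open_punct w(1) z]] by simp
  have eq: "\<And>x. x \<in> punct \<Longrightarrow> ?K * w x = w (c *s x)"
    using w(2) c by (simp add: homg_def in_punct)
  have d3: "((\<lambda>x. w (c *s x)) has_derivative (\<lambda>v. ?K * frechet_derivative w (at z) v)) (at z)"
    using has_derivative_transform_within_open[OF d2 open_punct z eq] .
  show ?thesis using has_derivative_unique[OF d1 d3] by metis
qed

lemma solve_wirt:
  fixes K A B A' B' c d :: complex
  assumes "K * (A + B) = c * A' + d * B'" "K * (\<i> * A - \<i> * B) = \<i> * c * A' - \<i> * d * B'"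
  shows "c * A' = K * A" "d * B' = K * B"
proof -
  have ii: "\<i> * \<i> = (-1::complex)" by simp
  show "c * A' = K * A" using assms ii by algebra
  show "d * B' = K * B" using assms ii by algebra
qed

lemma homg_dz:
  assumes w: "smooth_on punct w" "homg p q w"
  shows "homg (p - 1) q (dz j w)" "homg p (q - 1) (dzbar j w)"
proof -
  have main: "dz j w (c *s z) = c powi (p - 1) * cnj c powi q * dz j w z \<and>
              dzbar j w (c *s z) = c powi p * cnj c powi (q - 1) * dzbar j w z"
    if z: "z \<noteq> 0" and c: "c \<noteq> 0" for z c
  proof -
    let ?K = "c powi p * cnj c powi q"
    have zp: "z \<in> punct" using z by (simp add: in_punct)
    have cz: "c *s z \<in> punct" using z c smult_nz by (auto simp: in_punct)
    have ax: "c *s axis j m = axis j (c * m)" for m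
      by (simp add: vec_eq_iff axis_def)
    have key: "?K * (m * dz j w z + cnj m * dzbar j w z) = (c * m) * dz j w (c *s z) + cnj (c * m) * dzbar j w (c *s z)" for m
      using homg_deriv_scale[OF w zp c, of "axis j m"] deriv_axis[OF smooth_has_derivative[OF open_punct w(1) zp], of j m]
        deriv_axis[OF smooth_has_derivative[OF open_punct w(1) cz], of j "c * m"] ax by simp
    have k1: "?K * (dz j w z + dzbar j w z) = c * dz j w (c *s z) + cnj c * dzbar j w (c *s z)"
      using key[of 1] by simp
    have k2: "?K * (\<i> * dz j w z - \<i> * dzbar j w z) = \<i> * c * dz j w (c *s z) - \<i> * cnj c * dzbar j w (c *s z)"
      using key[of "\<i>"] by (simp add: algebra_simps)
    note AB = solve_wirt[OF k1 k2]
    have A: "c * dz j w (c *s z) = ?K * dz j w z" using AB(1) .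
    have B: "cnj c * dzbar j w (c *s z) = ?K * dzbar j w z" using AB(2) .
    have cc: "cnj c \<noteq> 0" using c by simp
    show ?thesis
      using A B c cc by (simp add: power_int_diff field_simps)
  qed
  show "homg (p - 1) q (dz j w)" "homg p (q - 1) (dzbar j w)"
    using main by (auto simp: homg_def)
qed

lemma homg_add: "homg p q a \<Longrightarrow> homg p q b \<Longrightarrow> homg p q (\<lambda>x. a x + b x)"
  by (simp add: homg_def algebra_simps)

lemma homg_diff: "homg p q a \<Longrightarrow> homg p q b \<Longrightarrow> homg p q (\<lambda>x. a x - b x)"
  by (simp add: homg_def algebra_simps)

lemma homg_cmult: "homg p q a \<Longrightarrow> homg p q (\<lambda>x. k * a x)"
  by (simp add: homg_def algebra_simps)

lemma homg_zero: "homg p q (\<lambda>x. 0)"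
  by (simp add: homg_def)

lemma homg_sum: "finite I \<Longrightarrow> (\<And>i. i \<in> I \<Longrightarrow> homg p q (a i)) \<Longrightarrow> homg p q (\<lambda>x. \<Sum>i\<in>I. a i x)"
  by (induction I rule: finite_induct) (auto intro: homg_add homg_zero)

lemma homg_mult: "homg p q a \<Longrightarrow> homg p' q' b \<Longrightarrow> homg (p + p') (q + q') (\<lambda>x. a x * b x)"
  by (simp add: homg_def power_int_add algebra_simps)

lemma homg_Lc: "homg 1 1 Lc"
  by (simp add: homg_def Lc_sum sum_distrib_left algebra_simps)

lemma homg_Lc_pow: "homg (int m) (int m) (\<lambda>x::'n::finite cvec. Lc x ^ m)"
proof (induction m)
  case 0 then show ?case by (simp add: homg_def)
next
  case (Suc m)
  have "homg (1 + int m) (1 + int m) (\<lambda>x::'n cvec. Lc x * Lc x ^ m)"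
    using homg_mult[OF homg_Lc Suc] by simp
  then show ?case by (simp add: add.commute)
qed

lemma homg_cong: "homg p q a \<Longrightarrow> (\<And>z. z \<noteq> 0 \<Longrightarrow> a z = b z) \<Longrightarrow> homg p q b"
  unfolding homg_def by (metis smult_nz)

lemma Lap_fun: "Lap G = (\<lambda>z. \<Sum>i\<in>UNIV. eps i * dz i (dzbar i G) z)"
  by (simp add: fun_eq_iff Lap_eps)

lemma homg_Lap:
  assumes "smooth_on punct w" "homg p q w"
  shows "homg (p - 1) (q - 1) (Lap w)"
proof -
  have "homg (p - 1) (q - 1) (dz i (dzbar i w))" for i
    using homg_dz(1)[OF smooth_dz(2)[OF open_punct assms(1)] homg_dz(2)[OF assms]] .
  then have "homg (p - 1) (q - 1) (\<lambda>z. \<Sum>i\<in>UNIV. eps i * dz i (dzbar i w) z)"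
    by (intro homg_sum homg_cmult) auto
  then show ?thesis by (simp add: Lap_fun)
qed

lemma smooth_Lap_pow: "smooth_on punct w \<Longrightarrow> smooth_on punct ((Lap ^^ m) w)"
  by (induction m) (auto intro: smooth_Lap open_punct)

lemma homg_Lap_pow: "smooth_on punct w \<Longrightarrow> homg p q w \<Longrightarrow> homg (p - int m) (q - int m) ((Lap ^^ m) w)"
proof (induction m)
  case 0 then show ?case by simp
next
  case (Suc m)
  have "homg (p - int m - 1) (q - int m - 1) (Lap ((Lap ^^ m) w))"
    by (rule homg_Lap) (use Suc smooth_Lap_pow in auto)
  then show ?case by (simp add: algebra_simps)
qed

lemma euler_aux:
  assumes w: "smooth_on punct w" "homg p q w" and z: "z \<in> punct"
  shows "frechet_derivative w (at z) (h *s z) = (h * of_int p + cnj h * of_int q) * w z"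
proof -
  have z0: "z \<noteq> 0" using z by (simp add: in_punct)
  have d1: "((\<lambda>c. w (c *s z)) has_derivative (\<lambda>h. frechet_derivative w (at z) (h *s z))) (at 1)"
    using has_derivative_compose[OF bounded_linear_imp_has_derivative[OF bl_smult_right[of z], of "at 1"]
        smooth_has_derivative[OF open_punct w(1), of "1 *s z"]] z by simp
  have dp: "((\<lambda>c. c powi p) has_derivative (\<lambda>h. h * (of_int p * 1 powi (p - 1)))) (at (1::complex))"
    using has_derivative_power_int'[of "1::complex" p UNIV] by simp
  have dq: "((\<lambda>c. cnj c powi q) has_derivative (\<lambda>h. cnj h * (of_int q * cnj 1 powi (q - 1)))) (at (1::complex))"
    using has_derivative_power_int[of cnj 1 "\<lambda>h. cnj h" UNIV q] has_derivative_cnj[OF has_derivative_ident, of "at 1"] by simp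
  have d2: "((\<lambda>c. c powi p * cnj c powi q * w z) has_derivative (\<lambda>h. (h * of_int p + cnj h * of_int q) * w z)) (at 1)"
    using has_derivative_mult[OF has_derivative_mult[OF dp dq] has_derivative_const[of "w z"]]
    by (simp add: algebra_simps)
  have eq: "\<And>c. c \<in> -{0} \<Longrightarrow> c powi p * cnj c powi q * w z = w (c *s z)"
    using w(2) z0 by (simp add: homg_def)
  have d3: "((\<lambda>c. w (c *s z)) has_derivative (\<lambda>h. (h * of_int p + cnj h * of_int q) * w z)) (at 1)"
    using has_derivative_transform_within_open[OF d2 open_Compl[OF closed_singleton[of "0::complex"]] _ eq] by simp
  show ?thesis using has_derivative_unique[OF d1 d3] by metis
qed

lemma euler:
  assumes w: "smooth_on punct w" "homg p q w" and z: "z \<in> punct"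
  shows "(\<Sum>i\<in>UNIV. z $ i * dz i w z) = of_int p * w z"
    "(\<Sum>i\<in>UNIV. cnj (z $ i) * dzbar i w z) = of_int q * w z"
proof -
  note D = smooth_has_derivative[OF open_punct w(1) z]
  let ?A = "\<Sum>i\<in>UNIV. z $ i * dz i w z" and ?B = "\<Sum>i\<in>UNIV. cnj (z $ i) * dzbar i w z"
  have e1: "?A + ?B = (of_int p + of_int q) * w z"
    using euler_aux[OF assms, of 1] deriv_expand[OF D, of "1 *s z"] by (simp add: sum.distrib)
  have e2: "\<i> * ?A - \<i> * ?B = (\<i> * of_int p - \<i> * of_int q) * w z"
    using euler_aux[OF assms, of "\<i>"] deriv_expand[OF D, of "\<i> *s z"]
    by (simp add: sum.distrib sum_distrib_left sum_subtractf algebra_simps)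
  have ii: "\<i> * \<i> = (-1::complex)" by simp
  show "?A = of_int p * w z" using e1 e2 ii by algebra
  show "?B = of_int q * w z" using e1 e2 ii by algebra
qed

lemma eps_sq2[simp]: "eps i * (eps i * a) = a"
  by (cases i) (auto simp: eps_def)

lemma sum_const_option: "(\<Sum>i\<in>(UNIV::'n::finite option set). c) = (of_nat CARD('n) + 1) * (c::complex)"
  by (simp add: sum_option algebra_simps)

lemma KL:
  fixes w :: "'n::finite cvec \<Rightarrow> complex"
  assumes w: "smooth_on punct w" "homg p q w" and z: "z \<in> punct"
  shows "Lap (\<lambda>x. Lc x * w x) z = Lc z * Lap w z + (of_nat CARD('n) + 1 + of_int p + of_int q) * w z"
proof -
  note op = open_punct
  have dw: "w differentiable (at x)" if "x \<in> punct" for x using smooth_differentiable[OF op w(1) that] .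
  have sdb: "smooth_on punct (dzbar i w)" for i using smooth_dz(2)[OF op w(1)] .
  define H where "H i x = eps i * (x $ i * w x) + Lc x * dzbar i w x" for i x
  have sH: "smooth_on punct (H i)" for i
    unfolding H_def[abs_def]
    by (intro smooth_add[OF op] smooth_mult[OF op] smooth_const[OF op] smooth_coord[OF op] w(1) smooth_Lc[OF op] sdb)
  have eqH: "dzbar i (\<lambda>x. Lc x * w x) x = H i x" if x: "x \<in> punct" for i x
    using dz_mult(2)[OF differentiable_Lc dw[OF x], of i] by (simp add: dz_Lc H_def algebra_simps)
  have step: "dz i (dzbar i (\<lambda>x. Lc x * w x)) z
      = eps i * (w z + z $ i * dz i w z) + eps i * cnj (z $ i) * dzbar i w z + Lc z * dz i (dzbar i w) z" for i
  proof -
    have "dz i (dzbar i (\<lambda>x. Lc x * w x)) z = dz i (H i) z"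
      using dz_fun_cong(1)[OF op z eqH sH] .
    also have "\<dots> = dz i (\<lambda>x. eps i * (x $ i * w x)) z + dz i (\<lambda>x. Lc x * dzbar i w x) z"
      unfolding H_def
      by (rule dz_add(1)) (intro differentiable_mult differentiable_const differentiable_coord dw z
          differentiable_Lc smooth_differentiable[OF op sdb z])+
    also have "dz i (\<lambda>x. eps i * (x $ i * w x)) z = eps i * (w z + z $ i * dz i w z)"
      using dz_cmult(1)[of "\<lambda>x. x $ i * w x" z i "eps i"] dz_mult(1)[OF differentiable_coord(1) dw[OF z], of i i]
        differentiable_mult[OF differentiable_coord(1) dw[OF z]]
      by (simp add: dz_coord)
    also have "dz i (\<lambda>x. Lc x * dzbar i w x) z = eps i * cnj (z $ i) * dzbar i w z + Lc z * dz i (dzbar i w) z"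
      using dz_mult(1)[OF differentiable_Lc smooth_differentiable[OF op sdb z], of i] by (simp add: dz_Lc)
    finally show ?thesis by simp
  qed
  have "Lap (\<lambda>x. Lc x * w x) z = (\<Sum>i\<in>UNIV. eps i * dz i (dzbar i (\<lambda>x. Lc x * w x)) z)"
    by (simp add: Lap_eps)
  also have "\<dots> = (\<Sum>i\<in>UNIV. w z + (z $ i * dz i w z + (cnj (z $ i) * dzbar i w z + Lc z * (eps i * dz i (dzbar i w) z))))"
    unfolding step by (rule sum.cong) (simp_all add: distrib_left mult.assoc eps_sq2 mult.left_commute[of "eps _" "Lc z"] add.assoc)
  also have "\<dots> = (of_nat CARD('n) + 1) * w z + of_int p * w z + of_int q * w z + Lc z * Lap w z"
    by (simp add: sum.distrib sum_const_option euler[OF w z] Lap_eps sum_distrib_left)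
  finally show ?thesis by (simp add: algebra_simps)
qed

lemma smooth_Lc_mult: "smooth_on punct w \<Longrightarrow> smooth_on punct (\<lambda>x. Lc x * w x)"
  by (intro smooth_mult open_punct smooth_Lc) auto

lemma homg_Lc_mult: "homg p q w \<Longrightarrow> homg (p + 1) (q + 1) (\<lambda>x. Lc x * w x)"
  using homg_mult[OF homg_Lc, of p q w] by (simp add: add.commute[of p 1] add.commute[of q 1])

lemma smooth_power: "open S \<Longrightarrow> smooth_on S f \<Longrightarrow> smooth_on S (\<lambda>x. f x ^ k :: 'a::real_normed_algebra_1)"
  by (induction k) (auto intro: smooth_mult smooth_const)

lemma LapPow_Lc:
  fixes w :: "'n::finite cvec \<Rightarrow> complex"
  assumes w: "smooth_on punct w" "homg p q w"
  shows "\<forall>z\<in>punct. (Lap ^^ Suc m) (\<lambda>x. Lc x * w x) z = Lc z * (Lap ^^ Suc m) w z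
      + of_nat (Suc m) * (of_nat CARD('n) + 1 + of_int p + of_int q - of_nat m) * (Lap ^^ m) w z"
proof (induction m)
  case 0
  show ?case using KL[OF w] by (simp add: algebra_simps)
next
  case (Suc m)
  let ?a = "of_nat (Suc m) * (of_nat CARD('n) + 1 + of_int p + of_int q - of_nat m) :: complex"
  let ?W1 = "(Lap ^^ Suc m) w" and ?W0 = "(Lap ^^ m) w"
  have s1: "smooth_on punct ?W1" and s0: "smooth_on punct ?W0" using smooth_Lap_pow[OF w(1)] by blast+
  have h1: "homg (p - int (Suc m)) (q - int (Suc m)) ?W1" using homg_Lap_pow[OF w] by blast
  have sF: "smooth_on punct (\<lambda>x. Lc x * ?W1 x + ?a * ?W0 x)"
    by (intro smooth_add[OF open_punct] smooth_Lc_mult s1 smooth_mult[OF open_punct] smooth_const[OF open_punct] s0)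
  show ?case
  proof
    fix z :: "'n cvec" assume z: "z \<in> punct"
    have "(Lap ^^ Suc (Suc m)) (\<lambda>x. Lc x * w x) z = Lap ((Lap ^^ Suc m) (\<lambda>x. Lc x * w x)) z" by simp
    also have "\<dots> = Lap (\<lambda>x. Lc x * ?W1 x + ?a * ?W0 x) z"
      by (rule Lap_cong[OF open_punct z _ sF]) (use Suc.IH in auto)
    also have "\<dots> = Lap (\<lambda>x. Lc x * ?W1 x) z + ?a * Lap ?W0 z"
      using Lap_add[OF open_punct z smooth_Lc_mult[OF s1] smooth_mult[OF open_punct smooth_const[OF open_punct] s0]]
        Lap_cmult[OF open_punct z s0] by simp
    also have "\<dots> = Lc z * Lap ?W1 z + (of_nat CARD('n) + 1 + of_int (p - int (Suc m)) + of_int (q - int (Suc m))) * ?W1 z + ?a * ?W1 z"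
      using KL[OF s1 h1 z] by simp
    finally show "(Lap ^^ Suc (Suc m)) (\<lambda>x. Lc x * w x) z = Lc z * (Lap ^^ Suc (Suc m)) w z
      + of_nat (Suc (Suc m)) * (of_nat CARD('n) + 1 + of_int p + of_int q - of_nat (Suc m)) * (Lap ^^ Suc m) w z"
      by (simp add: algebra_simps)
  qed
qed

lemma Lap_Lcpow:
  fixes g :: "'n::finite cvec \<Rightarrow> complex"
  assumes g: "smooth_on punct g" "homg p q g"
  shows "\<forall>z\<in>punct. Lap (\<lambda>x. Lc x ^ Suc j * g x) z = Lc z ^ Suc j * Lap g z
      + of_nat (Suc j) * (of_nat CARD('n) + of_nat (Suc j) + of_int p + of_int q) * Lc z ^ j * g z"
proof (induction j)
  case 0
  show ?case using KL[OF g] by (simp add: algebra_simps)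
next
  case (Suc j)
  let ?G = "\<lambda>x. Lc x ^ Suc j * g x"
  have sG: "smooth_on punct ?G"
    by (intro smooth_mult[OF open_punct] g(1) smooth_power[OF open_punct] smooth_Lc[OF open_punct])
  have hG: "homg (int (Suc j) + p) (int (Suc j) + q) ?G"
    using homg_mult[OF homg_Lc_pow g(2)] .
  show ?case
  proof
    fix z :: "'n cvec" assume z: "z \<in> punct"
    have "Lap (\<lambda>x. Lc x ^ Suc (Suc j) * g x) z = Lap (\<lambda>x. Lc x * ?G x) z"
      by (rule Lap_cong[OF open_punct z _ smooth_Lc_mult[OF sG]]) simp
    also have "\<dots> = Lc z * Lap ?G z + (of_nat CARD('n) + 1 + of_int (int (Suc j) + p) + of_int (int (Suc j) + q)) * ?G z"
      using KL[OF sG hG z] .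
    finally show "Lap (\<lambda>x. Lc x ^ Suc (Suc j) * g x) z = Lc z ^ Suc (Suc j) * Lap g z
      + of_nat (Suc (Suc j)) * (of_nat CARD('n) + of_nat (Suc (Suc j)) + of_int p + of_int q) * Lc z ^ Suc j * g z"
      using Suc.IH z by (simp add: algebra_simps)
  qed
qed


lemma bb_smult: "bounded_bilinear (\<lambda>(c::complex) (v::'n::finite cvec). c *s v)"
proof -
  have "bilinear (\<lambda>(c::complex) (v::'n::finite cvec). c *s v)"
    unfolding bilinear_def
    by (auto intro!: linearI simp: vec_eq_iff algebra_simps)
  then show ?thesis using bilinear_conv_bounded_bilinear by blast
qed

lemma mult_cnj_sq: "c * cnj c = (complex_of_real (cmod c))\<^sup>2"
  using complex_norm_square[of c] by simp

lemma cmod_sq_Re: "(cmod a)\<^sup>2 = Re (a * cnj a)"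
  by (simp add: cmod_power2) (simp add: power2_eq_square)

definition nz :: "'n::finite cvec \<Rightarrow> real" where
  "nz z = (\<Sum>i\<in>UNIV. (cmod (z $ i))\<^sup>2)"

lemma nz_pos: "z \<noteq> 0 \<Longrightarrow> nz z > 0"
proof -
  assume "z \<noteq> 0"
  then obtain i where i: "z $ i \<noteq> 0" by (auto simp: vec_eq_iff)
  have p: "(cmod (z $ i))\<^sup>2 > 0" using i by simp
  have le: "(cmod (z $ i))\<^sup>2 \<le> nz z"
    unfolding nz_def by (rule member_le_sum) auto
  show ?thesis using p le by linarith
qed

lemma nz_smult: "nz (c *s z) = (cmod c)\<^sup>2 * nz z"
  by (simp add: nz_def norm_mult power_mult_distrib sum_distrib_left)

lemma nz_Re: "nz z = Re (\<Sum>i\<in>UNIV. z $ i * cnj (z $ i))"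
  unfolding nz_def cmod_sq_Re by (simp add: Re_sum)

lemma smooth_nz: "open S \<Longrightarrow> smooth_on S nz"
proof -
  assume S: "open S"
  have "smooth_on S (\<lambda>z. Re (\<Sum>i\<in>UNIV. z $ i * cnj (z $ i)))"
    by (intro smooth_linear[OF S bounded_linear_Re] smooth_sum[OF S] smooth_mult[OF S] smooth_coord[OF S]) auto
  then show ?thesis by (simp add: nz_Re[abs_def])
qed

lemma smooth_inv_nz: "smooth_on punct (\<lambda>z. inverse (nz z))"
  by (rule smooth_compose[OF open_punct _ _ smooth_nz[OF open_punct] smooth_inverse])
     (use nz_pos in \<open>fastforce simp: in_punct\<close>)+

definition pa :: "'n::finite cvec \<Rightarrow> complex" where
  "pa z = cnj (z $ None) * complex_of_real (inverse (nz z))"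

definition pb :: "'n::finite cvec \<Rightarrow> complex" where
  "pb z = complex_of_real (1 - 2 * (cmod (z $ None))\<^sup>2 * inverse (nz z))"

definition ee :: "'n::finite cvec" where
  "ee = axis (Some undefined) 1"

definition ppi :: "'n::finite cvec \<Rightarrow> 'n cvec" where
  "ppi z = pa z *s z + pb z *s ee"

lemma smooth_ppi: "smooth_on punct (ppi :: 'n::finite cvec \<Rightarrow> 'n cvec)"
proof -
  note op = open_punct
  have sinv: "smooth_on punct (\<lambda>z::'n cvec. complex_of_real (inverse (nz z)))"
    by (rule smooth_linear[OF op bounded_linear_of_real smooth_inv_nz])
  have spa: "smooth_on punct (pa :: 'n cvec \<Rightarrow> complex)"
    unfolding pa_def[abs_def] by (intro smooth_mult[OF op] smooth_coord[OF op] sinv)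
  have sn: "smooth_on punct (\<lambda>z::'n cvec. (cmod (z $ None))\<^sup>2)"
  proof -
    show ?thesis unfolding cmod_sq_Re
      by (intro smooth_linear[OF op bounded_linear_Re] smooth_mult[OF op] smooth_coord[OF op])
  qed
  have "smooth_on punct (\<lambda>z::'n cvec. 1 - 2 * (cmod (z $ None))\<^sup>2 * inverse (nz z))"
    by (intro smooth_diff[OF op] smooth_const[OF op] smooth_mult[OF op] sn smooth_inv_nz)
  then have spb: "smooth_on punct (pb :: 'n cvec \<Rightarrow> complex)"
    unfolding pb_def[abs_def] by (rule smooth_linear[OF op bounded_linear_of_real])
  show ?thesis
    unfolding ppi_def[abs_def]
    by (intro smooth_add[OF op] smooth_bilinear[OF op bb_smult] spa spb smooth_id[OF op] smooth_const[OF op])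
qed

lemma ppi_nz: "z \<noteq> 0 \<Longrightarrow> ppi z \<noteq> 0"
proof
  assume z: "z \<noteq> 0" and p: "ppi z = 0"
  have n: "nz z > 0" using nz_pos[OF z] .
  have "ppi z $ None = pa z * z $ None" by (simp add: ppi_def ee_def axis_def)
  also have "\<dots> = (z $ None * cnj (z $ None)) * complex_of_real (inverse (nz z))"
    by (simp add: pa_def algebra_simps)
  also have "\<dots> = complex_of_real ((cmod (z $ None))\<^sup>2 / nz z)"
    by (simp only: complex_norm_square[symmetric] of_real_mult divide_inverse)
  finally have "(cmod (z $ None))\<^sup>2 / nz z = 0" using p by simp
  then have z0: "z $ None = 0" using n by simp
  have "ppi z $ Some undefined = pa z * z $ Some undefined + pb z"
    by (simp add: ppi_def ee_def axis_def)
  also have "\<dots> = 1" using z0 by (simp add: pa_def pb_def)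
  finally show False using p by simp
qed

lemma ppi_smult: "z \<noteq> 0 \<Longrightarrow> c \<noteq> 0 \<Longrightarrow> ppi (c *s z) = ppi z"
proof -
  assume z: "z \<noteq> 0" and c: "c \<noteq> 0"
  have n: "nz z > 0" using nz_pos[OF z] .
  have cc: "(cmod c)\<^sup>2 \<noteq> 0" using c by simp
  have e: "pa (c *s z) * c = pa z"
    using cc by (simp add: pa_def nz_smult field_simps mult.assoc[symmetric] mult_cnj_sq)
  have b: "pb (c *s z) = pb z"
    using cc by (simp add: pb_def nz_smult norm_mult power_mult_distrib field_simps)
  show ?thesis by (simp add: ppi_def b vector_smult_assoc e)
qed

lemma Lform_smult: "Lform (c *s z) = (cmod c)\<^sup>2 * Lform z"
proof -
  have "Lc (c *s z) = c * cnj c * Lc z" by (simp add: Lc_sum sum_distrib_left algebra_simps)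
  then have "complex_of_real (Lform (c *s z)) = complex_of_real ((cmod c)\<^sup>2 * Lform z)"
    by (simp add: Lc_def mult_cnj_sq)
  then show ?thesis using of_real_eq_iff by blast
qed

lemma ppi_null:
  assumes z: "z \<in> nullcone"
  shows "ppi z = pa z *s z" "pa z \<noteq> 0"
proof -
  have z0': "z \<noteq> 0" and L: "Lform z = 0" using z by (auto simp: nullcone_def)
  have s: "(\<Sum>j\<in>UNIV. (cmod (z $ Some j))\<^sup>2) = (cmod (z $ None))\<^sup>2" using L by (simp add: Lform_def)
  have nzz: "nz z = 2 * (cmod (z $ None))\<^sup>2"
    using s by (simp add: nz_def sum_option)
  have "z $ None \<noteq> 0"
  proof
    assume "z $ None = 0"
    then have "nz z = 0" using nzz by simp
    then show False using nz_pos[OF z0'] by simp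
  qed
  then show "pa z \<noteq> 0" using nz_pos[OF z0'] by (simp add: pa_def)
  have "pb z = 0" using nzz \<open>z $ None \<noteq> 0\<close> by (simp add: pb_def)
  then show "ppi z = pa z *s z" by (simp add: ppi_def vec_eq_iff)
qed

lemma exists_hom_ext:
  fixes f :: "'n::finite cvec \<Rightarrow> real"
  assumes "f \<in> Eclass"
  shows "\<exists>F. hom_ext f F"
proof -
  obtain g where g: "smooth_on punct g" "\<forall>\<zeta>\<in>nullcone. g \<zeta> = f \<zeta>"
    and inv: "\<forall>\<zeta>\<in>nullcone. \<forall>c::complex. c \<noteq> 0 \<longrightarrow> f (c *s \<zeta>) = f \<zeta>"
    using assms by (auto simp: Eclass_def smooth_on_N_def)
  define F where "F = (\<lambda>z. g (ppi z))"
  have sF: "smooth_on punct F"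
    unfolding F_def by (rule smooth_compose[OF open_punct open_punct _ smooth_ppi g(1)]) (auto simp: in_punct ppi_nz)
  have hF: "hom00 F" by (simp add: hom00_def F_def ppi_smult)
  have nF: "\<forall>\<zeta>\<in>nullcone. F \<zeta> = f \<zeta>"
  proof
    fix z :: "'n cvec" assume z: "z \<in> nullcone"
    have pz: "pa z *s z \<in> nullcone"
      using z ppi_null(2)[OF z] smult_nz by (auto simp: nullcone_def Lform_smult)
    have "F z = g (pa z *s z)" by (simp add: F_def ppi_null(1)[OF z])
    also have "\<dots> = f (pa z *s z)" using g(2) pz by blast
    also have "\<dots> = f z" using inv z ppi_null(2)[OF z] by blast
    finally show "F z = f z" .
  qed
  show ?thesis using sF hF nF by (auto simp: hom_ext_def)
qed


lemma deriv_line: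
  fixes F :: "'a::real_normed_vector \<Rightarrow> real"
  assumes "(F has_derivative D) (at (a + s *\<^sub>R u))"
  shows "((\<lambda>s. F (a + s *\<^sub>R u)) has_derivative (\<lambda>h. h * D u)) (at s within X)"
proof -
  have l: "((\<lambda>s. a + s *\<^sub>R u) has_derivative (\<lambda>h. h *\<^sub>R u)) (at s within X)"
    by (auto intro!: derivative_eq_intros)
  have lin: "linear D" using assms has_derivative_linear by blast
  have "((\<lambda>s. F (a + s *\<^sub>R u)) has_derivative (\<lambda>h. D (h *\<^sub>R u))) (at s within X)"
    using has_derivative_compose[OF l assms] .
  then show ?thesis by (simp add: linear_scale[OF lin])
qed

lemma mvt2:
  fixes F :: "'a::real_normed_vector \<Rightarrow> real"
  assumes dF: "\<And>x. x \<in> S \<Longrightarrow> (F has_derivative DF x) (at x)"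
    and dG: "\<And>x. x \<in> S \<Longrightarrow> ((\<lambda>y. DF y u) has_derivative DG x) (at x)"
    and t: "0 < t" and sq: "\<And>s r. s \<in> {0..t} \<Longrightarrow> r \<in> {0..t} \<Longrightarrow> z + s *\<^sub>R u + r *\<^sub>R v \<in> S"
  shows "\<exists>\<sigma>\<in>{0..t}. \<exists>\<tau>\<in>{0..t}. F (z + t *\<^sub>R u + t *\<^sub>R v) - F (z + t *\<^sub>R u) - F (z + t *\<^sub>R v) + F z
           = t * t * DG (z + \<sigma> *\<^sub>R u + \<tau> *\<^sub>R v) v"
proof -
  define \<psi> where "\<psi> s = F ((z + t *\<^sub>R v) + s *\<^sub>R u) - F (z + s *\<^sub>R u)" for s
  have d\<psi>: "(\<psi> has_derivative (\<lambda>h. h * (DF ((z + t *\<^sub>R v) + s *\<^sub>R u) u - DF (z + s *\<^sub>R u) u))) (at s within {0..t})"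
    if "0 \<le> s" "s \<le> t" for s
  proof -
    have m1: "z + t *\<^sub>R v + s *\<^sub>R u \<in> S" using sq[of s t] that t by (simp add: algebra_simps)
    have m2: "z + s *\<^sub>R u \<in> S" using sq[of s 0] that t by simp
    show ?thesis unfolding \<psi>_def
      using has_derivative_diff[OF deriv_line[OF dF[OF m1]] deriv_line[OF dF[OF m2]]]
      by (simp add: algebra_simps)
  qed
  obtain \<sigma> where \<sigma>: "\<sigma> \<in> {0..t}"
    and e1: "\<psi> t - \<psi> 0 = (t - 0) * (DF ((z + t *\<^sub>R v) + \<sigma> *\<^sub>R u) u - DF (z + \<sigma> *\<^sub>R u) u)"
    using mvt_very_simple[of 0 t \<psi>, OF _ d\<psi>] t by auto
  define chi where "chi r = DF ((z + \<sigma> *\<^sub>R u) + r *\<^sub>R v) u" for r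
  have dchi: "(chi has_derivative (\<lambda>h. h * DG ((z + \<sigma> *\<^sub>R u) + r *\<^sub>R v) v)) (at r within {0..t})"
    if "0 \<le> r" "r \<le> t" for r
  proof -
    have m: "z + \<sigma> *\<^sub>R u + r *\<^sub>R v \<in> S" using sq[of \<sigma> r] that \<sigma> by simp
    show ?thesis unfolding chi_def using deriv_line[of "\<lambda>y. DF y u", OF dG[OF m]] .
  qed
  obtain \<tau> where \<tau>: "\<tau> \<in> {0..t}"
    and e2: "chi t - chi 0 = (t - 0) * DG ((z + \<sigma> *\<^sub>R u) + \<tau> *\<^sub>R v) v"
    using mvt_very_simple[of 0 t chi, OF _ dchi] t by auto
  have "F (z + t *\<^sub>R u + t *\<^sub>R v) - F (z + t *\<^sub>R u) - F (z + t *\<^sub>R v) + F z = \<psi> t - \<psi> 0"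
    by (simp add: \<psi>_def algebra_simps)
  also have "\<dots> = t * (chi t - chi 0)" using e1 by (simp add: chi_def algebra_simps)
  also have "\<dots> = t * t * DG (z + \<sigma> *\<^sub>R u + \<tau> *\<^sub>R v) v" using e2 by simp
  finally show ?thesis using \<sigma> \<tau> by blast
qed

lemma schwarz:
  fixes F :: "'a::real_normed_vector \<Rightarrow> real"
  assumes S: "open S" "z \<in> S"
    and dF: "\<And>x. x \<in> S \<Longrightarrow> (F has_derivative DF x) (at x)"
    and dGu: "\<And>x. x \<in> S \<Longrightarrow> ((\<lambda>y. DF y u) has_derivative DGu x) (at x)"
    and dGv: "\<And>x. x \<in> S \<Longrightarrow> ((\<lambda>y. DF y v) has_derivative DGv x) (at x)"
    and cu: "continuous (at z) (\<lambda>x. DGu x v)"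
    and cv: "continuous (at z) (\<lambda>x. DGv x u)"
  shows "DGu z v = DGv z u"
proof (rule ccontr)
  assume ne: "DGu z v \<noteq> DGv z u"
  define \<epsilon> where "\<epsilon> = \<bar>DGu z v - DGv z u\<bar> / 3"
  have \<epsilon>: "\<epsilon> > 0" using ne by (simp add: \<epsilon>_def)
  obtain d1 where d1: "d1 > 0" "\<And>x. dist x z < d1 \<Longrightarrow> dist (DGu x v) (DGu z v) < \<epsilon>"
    using cu \<epsilon> unfolding continuous_at_eps_delta by blast
  obtain d2 where d2: "d2 > 0" "\<And>x. dist x z < d2 \<Longrightarrow> dist (DGv x u) (DGv z u) < \<epsilon>"
    using cv \<epsilon> unfolding continuous_at_eps_delta by blast
  obtain r where r: "r > 0" "ball z r \<subseteq> S" using S open_contains_ball by blast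
  define M where "M = norm u + norm v + 1"
  have M: "M > 0" by (simp add: M_def add_nonneg_pos)
  define t where "t = min r (min d1 d2) / (2 * M)"
  have t: "t > 0" using r d1 d2 M by (simp add: t_def)
  have close: "dist (z + s *\<^sub>R u + q *\<^sub>R v) z < min r (min d1 d2)" if "s \<in> {0..t}" "q \<in> {0..t}" for s q
  proof -
    have "dist (z + s *\<^sub>R u + q *\<^sub>R v) z = norm (s *\<^sub>R u + q *\<^sub>R v)" by (simp add: dist_norm)
    also have "\<dots> \<le> s * norm u + q * norm v"
      using that norm_triangle_ineq[of "s *\<^sub>R u" "q *\<^sub>R v"] by simp
    also have "\<dots> \<le> t * norm u + t * norm v"
      using that by (intro add_mono mult_right_mono) auto
    also have "\<dots> < t * (2 * M)"
    proof -
      have "0 \<le> t * norm u" "0 \<le> t * norm v" using t by auto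
      moreover have "t * (2 * M) = 2 * (t * norm u) + 2 * (t * norm v) + 2 * t" by (simp add: M_def algebra_simps)
      ultimately show ?thesis using t by linarith
    qed
    also have "\<dots> = min r (min d1 d2)" using M by (simp add: t_def)
    finally show ?thesis .
  qed
  have sq1: "z + s *\<^sub>R u + q *\<^sub>R v \<in> S" if "s \<in> {0..t}" "q \<in> {0..t}" for s q
    using close[OF that] r(2) by (auto simp: dist_commute)
  have sq2: "z + s *\<^sub>R v + q *\<^sub>R u \<in> S" if "s \<in> {0..t}" "q \<in> {0..t}" for s q
    using sq1[OF that(2,1)] by (simp add: algebra_simps)
  obtain \<sigma> \<tau> where st: "\<sigma> \<in> {0..t}" "\<tau> \<in> {0..t}"
    and A: "F (z + t *\<^sub>R u + t *\<^sub>R v) - F (z + t *\<^sub>R u) - F (z + t *\<^sub>R v) + F z = t * t * DGu (z + \<sigma> *\<^sub>R u + \<tau> *\<^sub>R v) v"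
    using mvt2[OF dF dGu t sq1] by blast
  obtain \<sigma>' \<tau>' where st': "\<sigma>' \<in> {0..t}" "\<tau>' \<in> {0..t}"
    and B: "F (z + t *\<^sub>R v + t *\<^sub>R u) - F (z + t *\<^sub>R v) - F (z + t *\<^sub>R u) + F z = t * t * DGv (z + \<sigma>' *\<^sub>R v + \<tau>' *\<^sub>R u) u"
    using mvt2[OF dF dGv t sq2] by blast
  have "t * t * DGu (z + \<sigma> *\<^sub>R u + \<tau> *\<^sub>R v) v = t * t * DGv (z + \<sigma>' *\<^sub>R v + \<tau>' *\<^sub>R u) u"
    using A B by (simp add: algebra_simps)
  then have eq: "DGu (z + \<sigma> *\<^sub>R u + \<tau> *\<^sub>R v) v = DGv (z + \<tau>' *\<^sub>R u + \<sigma>' *\<^sub>R v) u"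
    using t by (simp add: algebra_simps)
  have c1: "dist (DGu (z + \<sigma> *\<^sub>R u + \<tau> *\<^sub>R v) v) (DGu z v) < \<epsilon>"
    using d1(2) close[OF st] by simp
  have c2: "dist (DGv (z + \<tau>' *\<^sub>R u + \<sigma>' *\<^sub>R v) u) (DGv z u) < \<epsilon>"
    using d2(2) close[OF st'(2,1)] by simp
  have "\<bar>DGu z v - DGv z u\<bar> < 2 * \<epsilon>"
    using c1 c2 eq by (simp add: dist_real_def)
  then show False using \<epsilon> by (simp add: \<epsilon>_def)
qed

lemma smooth_cont_at: "open S \<Longrightarrow> smooth_on S f \<Longrightarrow> z \<in> S \<Longrightarrow> continuous (at z) f"
  using Ck_cont[of 0 S f] smooth_Ck continuous_on_eq_continuous_at by blast

lemma Im_dz_dzbar_real: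
  fixes F :: "'n::finite cvec \<Rightarrow> real"
  assumes sF: "smooth_on punct F" and z: "z \<in> punct"
  shows "Im (dz i (dzbar i (\<lambda>x. complex_of_real (F x))) z) = 0"
proof -
  note op = open_punct
  define e :: "'n cvec" where "e = axis i 1"
  define ie :: "'n cvec" where "ie = axis i \<i>"
  define a where "a x = frechet_derivative F (at x) e" for x
  define b where "b x = frechet_derivative F (at x) ie" for x
  have sa: "smooth_on punct a" unfolding a_def[abs_def] by (rule smooth_deriv[OF op sF])
  have sb: "smooth_on punct b" unfolding b_def[abs_def] by (rule smooth_deriv[OF op sF])
  define H where "H x = (complex_of_real (a x) + \<i> * complex_of_real (b x)) / 2" for x
  have sH: "smooth_on punct H"
    unfolding H_def[abs_def]
    by (intro smooth_linear[OF op bl_div2] smooth_add[OF op] smooth_mult[OF op] smooth_const[OF op]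
        smooth_linear[OF op bounded_linear_of_real] sa sb)
  have eqH: "dzbar i (\<lambda>x. complex_of_real (F x)) x = H x" if x: "x \<in> punct" for x
  proof -
    have "((\<lambda>x. complex_of_real (F x)) has_derivative (\<lambda>h. complex_of_real (frechet_derivative F (at x) h))) (at x)"
      using bounded_linear.has_derivative[OF bounded_linear_of_real smooth_has_derivative[OF op sF x]] .
    then show ?thesis by (simp add: dzbar_at H_def a_def b_def e_def ie_def)
  qed
  have da: "(a has_derivative frechet_derivative a (at z)) (at z)" using smooth_has_derivative[OF op sa z] .
  have db: "(b has_derivative frechet_derivative b (at z)) (at z)" using smooth_has_derivative[OF op sb z] .
  have dH: "(H has_derivative (\<lambda>h. (complex_of_real (frechet_derivative a (at z) h) + \<i> * complex_of_real (frechet_derivative b (at z) h)) / 2)) (at z)"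
    unfolding H_def[abs_def]
    by (intro derivative_eq_intros bounded_linear.has_derivative[OF bounded_linear_of_real da]
        bounded_linear.has_derivative[OF bounded_linear_of_real db]) (auto intro: da db)
  have sym: "frechet_derivative a (at z) ie = frechet_derivative b (at z) e"
  proof (rule schwarz[OF op z, where F = F and DF = "\<lambda>x. frechet_derivative F (at x)"])
    show "\<And>x. x \<in> punct \<Longrightarrow> (F has_derivative frechet_derivative F (at x)) (at x)"
      using smooth_has_derivative[OF op sF] .
    show "\<And>x. x \<in> punct \<Longrightarrow> ((\<lambda>y. frechet_derivative F (at y) e) has_derivative frechet_derivative a (at x)) (at x)"
      using smooth_has_derivative[OF op sa] unfolding a_def[abs_def] .
    show "\<And>x. x \<in> punct \<Longrightarrow> ((\<lambda>y. frechet_derivative F (at y) ie) has_derivative frechet_derivative b (at x)) (at x)"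
      using smooth_has_derivative[OF op sb] unfolding b_def[abs_def] .
    show "continuous (at z) (\<lambda>x. frechet_derivative a (at x) ie)"
      by (rule smooth_cont_at[OF op smooth_deriv[OF op sa] z])
    show "continuous (at z) (\<lambda>x. frechet_derivative b (at x) e)"
      by (rule smooth_cont_at[OF op smooth_deriv[OF op sb] z])
  qed
  have "dz i (dzbar i (\<lambda>x. complex_of_real (F x))) z = dz i H z"
    using dz_fun_cong(1)[OF op z eqH sH] .
  also have "\<dots> = ((complex_of_real (frechet_derivative a (at z) e) + \<i> * complex_of_real (frechet_derivative b (at z) e)) / 2
      - \<i> * ((complex_of_real (frechet_derivative a (at z) ie) + \<i> * complex_of_real (frechet_derivative b (at z) ie)) / 2)) / 2"
    using dz_at[OF dH] by (simp add: e_def ie_def)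
  finally have E: "dz i (dzbar i (\<lambda>x. complex_of_real (F x))) z = ((complex_of_real (frechet_derivative a (at z) e) + \<i> * complex_of_real (frechet_derivative b (at z) e)) / 2
      - \<i> * ((complex_of_real (frechet_derivative a (at z) ie) + \<i> * complex_of_real (frechet_derivative b (at z) ie)) / 2)) / 2" .
  show ?thesis unfolding E using sym by (simp add: Im_divide)
qed

lemma Lap_real:
  fixes F :: "'n::finite cvec \<Rightarrow> real"
  assumes "smooth_on punct F" "z \<in> punct"
  shows "Im (Lap (\<lambda>x. complex_of_real (F x)) z) = 0"
proof -
  have "Im (eps i * dz i (dzbar i (\<lambda>x. complex_of_real (F x))) z) = 0" for i
    using Im_dz_dzbar_real[OF assms] by (cases i) (auto simp: eps_def)
  then show ?thesis by (simp add: Lap_eps Im_sum)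
qed


lemma has_derivative_pair_left: "((\<lambda>x. (x, t)) has_derivative (\<lambda>v. (v, 0))) (at x within X)"
  by (auto intro!: derivative_eq_intros)

lemma bl_pair_left: "bounded_linear (\<lambda>v::'a::real_normed_vector. (v, 0::'b::real_normed_vector))"
  using bounded_linear_Pair[OF bounded_linear_ident bounded_linear_zero] by simp

lemma param_int_deriv:
  fixes \<Phi> :: "'a::euclidean_space \<times> real \<Rightarrow> 'c::euclidean_space"
  assumes U: "open U" and s: "smooth_on (U \<times> UNIV) \<Phi>" and z: "z \<in> U"
  shows "((\<lambda>x. integral {0..1} (\<lambda>u. \<Phi> (x, u))) has_derivative
          (\<lambda>v. integral {0..1} (\<lambda>u. frechet_derivative \<Phi> (at (z, u)) (v, 0)))) (at z)"
proof -
  have W: "open (U \<times> (UNIV::real set))" using U by (simp add: open_Times)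
  obtain r where r: "r > 0" "ball z r \<subseteq> U" using U z open_contains_ball by blast
  let ?B = "ball z r"
  define fx where "fx x t = Blinfun (\<lambda>v. frechet_derivative \<Phi> (at (x, t)) (v, 0))" for x t
  have dP: "(\<Phi> has_derivative frechet_derivative \<Phi> (at (x, t))) (at (x, t))" if "x \<in> U" for x t
    using smooth_has_derivative[OF W s] that by simp
  have app: "blinfun_apply (fx x t) = (\<lambda>v. frechet_derivative \<Phi> (at (x, t)) (v, 0))" if "x \<in> U" for x t
  proof -
    have "bounded_linear (frechet_derivative \<Phi> (at (x, t)))"
      using dP[OF that] has_derivative_bounded_linear by blast
    then have "bounded_linear (\<lambda>v. frechet_derivative \<Phi> (at (x, t)) (v, 0))"
      by (rule bounded_linear_compose[OF _ bl_pair_left])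
    then show ?thesis unfolding fx_def by (rule bounded_linear_Blinfun_apply)
  qed
  have cP: "continuous_on (U \<times> UNIV) \<Phi>" using s by (meson Ck_cont smooth_on_def)
  have cD: "continuous_on (U \<times> UNIV) (\<lambda>p. frechet_derivative \<Phi> (at p) (i, 0))" for i
    using smooth_deriv[OF W s] by (meson Ck_cont smooth_on_def)
  have L: "((\<lambda>x. integral (cbox 0 1) (\<lambda>t. \<Phi> (x, t))) has_derivative blinfun_apply (integral (cbox 0 1) (fx z))) (at z within ?B)"
  proof (rule leibniz_rule[where fx = fx])
    fix x t assume x: "x \<in> ?B" and t: "t \<in> cbox (0::real) 1"
    have "((\<lambda>x. \<Phi> (x, t)) has_derivative (\<lambda>v. frechet_derivative \<Phi> (at (x, t)) (v, 0))) (at x within ?B)"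
      using has_derivative_compose[OF has_derivative_pair_left dP] x r(2) by blast
    then show "((\<lambda>x. \<Phi> (x, t)) has_derivative blinfun_apply (fx x t)) (at x within ?B)"
      using app x r(2) by auto
  next
    fix x assume x: "x \<in> ?B"
    have "continuous_on (cbox 0 1) (\<lambda>t. \<Phi> (x, t))"
      by (rule continuous_on_compose2[OF cP]) (use x r(2) in \<open>auto intro!: continuous_intros\<close>)
    then show "(\<lambda>t. \<Phi> (x, t)) integrable_on cbox 0 1" by (rule integrable_continuous)
  next
    show "continuous_on (?B \<times> cbox 0 1) (\<lambda>(x, t). fx x t)"
    proof (rule continuous_on_blinfun_componentwise)
      fix i :: 'a assume "i \<in> Basis"
      have "continuous_on (?B \<times> cbox 0 1) (\<lambda>p. frechet_derivative \<Phi> (at p) (i, 0))"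
        by (rule continuous_on_subset[OF cD]) (use r(2) in auto)
      moreover have "\<And>p. p \<in> ?B \<times> cbox 0 1 \<Longrightarrow> frechet_derivative \<Phi> (at p) (i, 0) = (case p of (x, t) \<Rightarrow> fx x t) i"
        using app r(2) by auto
      ultimately show "continuous_on (?B \<times> cbox 0 1) (\<lambda>p. (case p of (x, t) \<Rightarrow> fx x t) i)"
        by (rule continuous_on_eq) (auto simp del: split_paired_All)
    qed
  qed (use r in auto)
  have intb: "fx z integrable_on cbox 0 1"
  proof -
    have "continuous_on (cbox 0 1) (fx z)"
    proof (rule continuous_on_blinfun_componentwise)
      fix i :: 'a assume "i \<in> Basis"
      have "continuous_on (cbox 0 1) (\<lambda>t. frechet_derivative \<Phi> (at (z, t)) (i, 0))"
        by (rule continuous_on_compose2[OF cD[of i]]) (use z in \<open>auto intro!: continuous_intros\<close>)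
      then show "continuous_on (cbox 0 1) (\<lambda>t. fx z t i)" using app[OF z] by simp
    qed
    then show ?thesis by (rule integrable_continuous)
  qed
  have AP: "blinfun_apply (integral (cbox 0 1) (fx z)) = (\<lambda>v. integral {0..1} (\<lambda>u. frechet_derivative \<Phi> (at (z, u)) (v, 0)))"
  proof (rule ext)
    fix v
    have "blinfun_apply (integral (cbox 0 1) (fx z)) v = integral (cbox 0 1) (\<lambda>y. blinfun_apply (fx z y) v)"
      by (rule blinfun_apply_integral[OF intb])
    also have "\<dots> = integral {0..1} (\<lambda>u. frechet_derivative \<Phi> (at (z, u)) (v, 0))"
      unfolding app[OF z] cbox_interval ..
    finally show "blinfun_apply (integral (cbox 0 1) (fx z)) v = integral {0..1} (\<lambda>u. frechet_derivative \<Phi> (at (z, u)) (v, 0))" .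
  qed
  have aw: "at z within ?B = at z" by (rule at_within_open) (use r in auto)
  show ?thesis using L unfolding aw unfolding AP unfolding cbox_interval .
qed

lemma param_int_smooth:
  fixes \<Phi> :: "'a::euclidean_space \<times> real \<Rightarrow> 'c::euclidean_space"
  assumes U: "open U" and s: "smooth_on (U \<times> UNIV) \<Phi>"
  shows "smooth_on U (\<lambda>x. integral {0..1} (\<lambda>u. \<Phi> (x, u)))"
proof -
  have W: "open (U \<times> (UNIV::real set))" using U by (simp add: open_Times)
  have "Ck k U (\<lambda>x. integral {0..1} (\<lambda>u. \<Phi> (x, u)))" if "smooth_on (U \<times> (UNIV::real set)) \<Phi>"
    for k and \<Phi> :: "'a \<times> real \<Rightarrow> 'c"
    using that
  proof (induction k arbitrary: \<Phi>)
    case 0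
    have "continuous_on U (\<lambda>x. integral {0..1} (\<lambda>u. \<Phi> (x, u)))"
      using param_int_deriv[OF U 0] has_derivative_continuous
      by (meson continuous_at_imp_continuous_on)
    then show ?case by simp
  next
    case (Suc k)
    show ?case
    proof (rule Ck_SucI[OF U param_int_deriv[OF U Suc.prems]])
      fix v
      have "smooth_on (U \<times> UNIV) (\<lambda>p. frechet_derivative \<Phi> (at p) (v, 0))"
        using smooth_deriv[OF W Suc.prems] .
      from Suc.IH[OF this] show "Ck k U (\<lambda>x. integral {0..1} (\<lambda>u. frechet_derivative \<Phi> (at (x, u)) (v, 0)))"
        by simp
    qed
  qed
  then show ?thesis using s by (simp add: smooth_on_def)
qed

lemma cmod_sq_Re2: "(cmod a)\<^sup>2 = Re (a * cnj a)"
  by (simp add: cmod_power2) (simp add: power2_eq_square)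

definition rr0 :: "'n::finite cvec \<Rightarrow> real" where "rr0 z = (cmod (z $ None))\<^sup>2"
definition rr1 :: "'n::finite cvec \<Rightarrow> real" where "rr1 z = (\<Sum>j\<in>UNIV. (cmod (z $ Some j))\<^sup>2)"
definition UU :: "'n::finite cvec set" where "UU = {z. 0 < rr0 z \<and> 0 < rr1 z}"
definition sig :: "'n::finite cvec \<Rightarrow> real" where "sig z = sqrt (rr1 z / rr0 z)"
definition axN :: "'n::finite cvec \<Rightarrow> 'n cvec" where "axN z = axis None (z $ None)"
definition gam :: "'n::finite cvec \<times> real \<Rightarrow> 'n cvec" where
  "gam p = fst p + ((sig (fst p) + snd p * (1 - sig (fst p))) - 1) *\<^sub>R axN (fst p)"

lemma Lform_rr: "Lform z = rr0 z - rr1 z"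
  by (simp add: Lform_def rr0_def rr1_def)

lemma smooth_rr: "open S \<Longrightarrow> smooth_on S rr0" "open S \<Longrightarrow> smooth_on S rr1"
  unfolding rr0_def[abs_def] rr1_def[abs_def] cmod_sq_Re2
  by (intro smooth_linear[OF _ bounded_linear_Re] smooth_sum smooth_mult smooth_coord; simp)+

lemma cont_rr: "continuous_on UNIV rr0" "continuous_on UNIV rr1"
  using Ck_cont[of 0 UNIV] smooth_Ck smooth_rr[OF open_UNIV] by blast+

lemma open_UU: "open UU"
proof -
  have "open {z. (0::real) < rr0 z}" by (rule open_Collect_less[OF continuous_on_const cont_rr(1)])
  moreover have "open {z. (0::real) < rr1 z}" by (rule open_Collect_less[OF continuous_on_const cont_rr(2)])
  ultimately show ?thesis unfolding UU_def Collect_conj_eq by (rule open_Int)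
qed

lemma nullcone_UU: "nullcone \<subseteq> UU"
proof
  fix z :: "'n::finite cvec" assume z: "z \<in> nullcone"
  then have z0: "z \<noteq> 0" and L: "rr0 z = rr1 z" by (auto simp: nullcone_def Lform_rr)
  have "rr0 z + rr1 z > 0"
  proof -
    obtain i where i: "z $ i \<noteq> 0" using z0 by (auto simp: vec_eq_iff)
    show ?thesis
    proof (cases i)
      case None then have "rr0 z > 0" using i by (simp add: rr0_def)
      moreover have "rr1 z \<ge> 0" by (simp add: rr1_def sum_nonneg)
      ultimately show ?thesis by simp
    next
      case (Some j)
      have "(cmod (z $ Some j))\<^sup>2 \<le> rr1 z" unfolding rr1_def by (rule member_le_sum) auto
      moreover have "(cmod (z $ Some j))\<^sup>2 > 0" using i Some by simp
      moreover have "rr0 z \<ge> 0" by (simp add: rr0_def)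
      ultimately show ?thesis by linarith
    qed
  qed
  then show "z \<in> UU" using L by (simp add: UU_def)
qed

lemma UU_punct: "UU \<subseteq> punct"
  by (auto simp: UU_def punct_def rr0_def)

lemma smooth_sig: "smooth_on UU sig"
proof -
  have q: "smooth_on UU (\<lambda>z. rr1 z * inverse (rr0 z))"
    by (intro smooth_mult[OF open_UU] smooth_rr[OF open_UU] smooth_compose[OF open_UU _ _ smooth_rr(1)[OF open_UU] smooth_inverse])
       (auto simp: UU_def)
  have "smooth_on UU (\<lambda>z. sqrt (rr1 z * inverse (rr0 z)))"
    by (rule smooth_compose[OF open_UU _ _ q smooth_sqrt]) (auto simp: UU_def)
  then show ?thesis by (simp add: sig_def[abs_def] divide_inverse)
qed

lemma bl_axis: "bounded_linear (\<lambda>c::complex. axis i c :: 'n::finite cvec)"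
proof -
  have "linear (\<lambda>c::complex. axis i c :: 'n::finite cvec)"
    by (rule linearI) (auto simp: vec_eq_iff axis_def)
  then show ?thesis using linear_conv_bounded_linear by blast
qed

lemma smooth_axN: "open S \<Longrightarrow> smooth_on S axN"
  unfolding axN_def[abs_def] by (intro smooth_linear[OF _ bl_axis] smooth_coord)

lemma open_W: "open (UU \<times> (UNIV::real set))"
  by (simp add: open_Times open_UU)

lemma smooth_fst: "smooth_on (UU \<times> (UNIV::real set)) (\<lambda>p::'n::finite cvec \<times> real. sig (fst p))"
  "smooth_on (UU \<times> (UNIV::real set)) (\<lambda>p::'n::finite cvec \<times> real. axN (fst p))"
  "smooth_on (UU \<times> (UNIV::real set)) (\<lambda>p::'n::finite cvec \<times> real. fst p)"
  "smooth_on (UU \<times> (UNIV::real set)) (\<lambda>p::'n::finite cvec \<times> real. snd p)"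
proof -
  show f: "smooth_on (UU \<times> (UNIV::real set)) (\<lambda>p::'n::finite cvec \<times> real. fst p)"
    by (rule smooth_linear[OF open_W bounded_linear_fst smooth_id[OF open_W]])
  show "smooth_on (UU \<times> (UNIV::real set)) (\<lambda>p::'n::finite cvec \<times> real. snd p)"
    by (rule smooth_linear[OF open_W bounded_linear_snd smooth_id[OF open_W]])
  show "smooth_on (UU \<times> (UNIV::real set)) (\<lambda>p::'n::finite cvec \<times> real. sig (fst p))"
    by (rule smooth_compose[OF open_W open_UU _ f smooth_sig]) auto
  show "smooth_on (UU \<times> (UNIV::real set)) (\<lambda>p::'n::finite cvec \<times> real. axN (fst p))"
    by (rule smooth_compose[OF open_W open_UU _ f smooth_axN[OF open_UU]]) auto
qed

lemma smooth_gam: "smooth_on (UU \<times> (UNIV::real set)) (gam :: 'n::finite cvec \<times> real \<Rightarrow> 'n cvec)"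
  unfolding gam_def[abs_def]
  by (intro smooth_add[OF open_W] smooth_scaleR[OF open_W] smooth_diff[OF open_W] smooth_mult[OF open_W]
      smooth_fst smooth_const[OF open_W])

lemma gam_punct: "p \<in> UU \<times> UNIV \<Longrightarrow> gam p \<in> punct"
proof -
  assume p: "p \<in> UU \<times> UNIV"
  then have "rr1 (fst p) > 0" by (auto simp: UU_def)
  have "\<exists>j. fst p $ Some j \<noteq> 0"
  proof (rule ccontr)
    assume "\<not> (\<exists>j. fst p $ Some j \<noteq> 0)"
    then have "rr1 (fst p) = 0" by (simp add: rr1_def)
    then show False using \<open>rr1 (fst p) > 0\<close> by simp
  qed
  then obtain j where j: "fst p $ Some j \<noteq> 0" by blast
  have "gam p $ Some j = fst p $ Some j" by (simp add: gam_def axN_def axis_def)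
  then show ?thesis using j unfolding in_punct vec_eq_iff by (metis zero_index)
qed


definition Phi :: "('n::finite cvec \<Rightarrow> complex) \<Rightarrow> 'n cvec \<times> real \<Rightarrow> complex" where
  "Phi h p = frechet_derivative h (at (gam p)) (axN (fst p))"

lemma smooth_Phi:
  fixes h :: "'n::finite cvec \<Rightarrow> complex"
  assumes h: "smooth_on punct h"
  shows "smooth_on (UU \<times> (UNIV::real set)) (Phi h)"
proof -
  define A where "A y = frechet_derivative h (at y) (axis None 1)" for y :: "'n cvec"
  define B where "B y = frechet_derivative h (at y) (axis None \<i>)" for y :: "'n cvec"
  have sA: "smooth_on punct A" unfolding A_def[abs_def] by (rule smooth_deriv[OF open_punct h])
  have sB: "smooth_on punct B" unfolding B_def[abs_def] by (rule smooth_deriv[OF open_punct h])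
  have gp: "gam ` (UU \<times> UNIV) \<subseteq> punct" using gam_punct by blast
  have sAg: "smooth_on (UU \<times> (UNIV::real set)) (\<lambda>p. A (gam p))"
    by (rule smooth_compose[OF open_W open_punct gp smooth_gam sA])
  have sBg: "smooth_on (UU \<times> (UNIV::real set)) (\<lambda>p. B (gam p))"
    by (rule smooth_compose[OF open_W open_punct gp smooth_gam sB])
  have bRe: "bounded_linear (\<lambda>p::'n cvec \<times> real. complex_of_real (Re (fst p $ None)))"
    by (intro bounded_linear_compose[OF bounded_linear_of_real] bounded_linear_compose[OF bounded_linear_Re]
        bounded_linear_compose[OF bounded_linear_vec_nth] bounded_linear_fst)
  have bIm: "bounded_linear (\<lambda>p::'n cvec \<times> real. complex_of_real (Im (fst p $ None)))"
    by (intro bounded_linear_compose[OF bounded_linear_of_real] bounded_linear_compose[OF bounded_linear_Im]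
        bounded_linear_compose[OF bounded_linear_vec_nth] bounded_linear_fst)
  have sE: "smooth_on (UU \<times> (UNIV::real set)) (\<lambda>p. complex_of_real (Re (fst p $ None)) * A (gam p) + complex_of_real (Im (fst p $ None)) * B (gam p))"
    by (intro smooth_add[OF open_W] smooth_mult[OF open_W] sAg sBg smooth_linear[OF open_W bRe smooth_id[OF open_W]]
        smooth_linear[OF open_W bIm smooth_id[OF open_W]])
  show ?thesis
  proof (rule smooth_cong[OF open_W sE])
    fix p :: "'n cvec \<times> real" assume p: "p \<in> UU \<times> UNIV"
    have lin: "linear (frechet_derivative h (at (gam p)))"
      using smooth_has_derivative[OF open_punct h gam_punct[OF p]] has_derivative_linear by blast
    have "Phi h p = frechet_derivative h (at (gam p)) (Re (fst p $ None) *\<^sub>R axis None 1 + Im (fst p $ None) *\<^sub>R axis None \<i>)"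
      unfolding Phi_def axN_def by (subst axis_decomp) simp
    also have "\<dots> = complex_of_real (Re (fst p $ None)) * A (gam p) + complex_of_real (Im (fst p $ None)) * B (gam p)"
      by (simp only: linear_add[OF lin] linear_scale[OF lin]) (simp add: A_def B_def scaleR_conv_of_real)
    finally show "complex_of_real (Re (fst p $ None)) * A (gam p) + complex_of_real (Im (fst p $ None)) * B (gam p) = Phi h p" by simp
  qed
qed

definition Iint :: "('n::finite cvec \<Rightarrow> complex) \<Rightarrow> 'n cvec \<Rightarrow> complex" where
  "Iint h z = integral {0..1} (\<lambda>u. Phi h (z, u))"

lemma smooth_Iint: "smooth_on punct h \<Longrightarrow> smooth_on UU (Iint h)"
  unfolding Iint_def[abs_def] by (rule param_int_smooth[OF open_UU smooth_Phi])

lemma gam_line: "gam (z, u) = (z + (sig z - 1) *\<^sub>R axN z) + u *\<^sub>R ((1 - sig z) *\<^sub>R axN z)"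
  by (simp add: gam_def algebra_simps)

lemma sig_sq: "z \<in> UU \<Longrightarrow> (sig z)\<^sup>2 = rr1 z / rr0 z"
  by (auto simp: UU_def sig_def)

lemma sig_nonneg: "sig z \<ge> 0"
  by (simp add: sig_def rr0_def rr1_def sum_nonneg)

lemma gam0_null:
  fixes z :: "'n::finite cvec"
  assumes z: "z \<in> UU"
  shows "z + (sig z - 1) *\<^sub>R axN z \<in> nullcone"
proof -
  let ?y = "z + (sig z - 1) *\<^sub>R axN z"
  have yN: "?y $ None = sig z *\<^sub>R z $ None" by (simp add: axN_def axis_def algebra_simps)
  have yS: "?y $ Some j = z $ Some j" for j by (simp add: axN_def axis_def)
  have "rr0 ?y = (sig z)\<^sup>2 * rr0 z" unfolding rr0_def yN by (simp add: power_mult_distrib)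
  also have "\<dots> = rr1 z" using z sig_sq[OF z] by (simp add: UU_def)
  finally have e: "rr0 ?y = rr1 ?y" unfolding rr1_def yS .
  have "rr1 ?y > 0" using z unfolding UU_def rr1_def yS by simp
  moreover have "rr1 (0::'n cvec) = 0" by (simp add: rr1_def)
  ultimately have "?y \<noteq> 0" by force
  then show ?thesis using e by (simp add: nullcone_def Lform_rr)
qed

lemma ftc_h:
  fixes h :: "'n::finite cvec \<Rightarrow> complex"
  assumes h: "smooth_on punct h" "\<forall>z\<in>nullcone. h z = 0" and z: "z \<in> UU"
  shows "h z = (1 - sig z) *\<^sub>R Iint h z"
proof -
  let ?a = "z + (sig z - 1) *\<^sub>R axN z" and ?b = "(1 - sig z) *\<^sub>R axN z"
  define \<phi> where "\<phi> u = h (gam (z, u))" for u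
  have gz: "(z, u) \<in> UU \<times> UNIV" for u using z by simp
  have d: "(\<phi> has_vector_derivative (1 - sig z) *\<^sub>R Phi h (z, u)) (at u within {0..1})" for u
  proof -
    have dl: "((\<lambda>u. ?a + u *\<^sub>R ?b) has_derivative (\<lambda>t. t *\<^sub>R ?b)) (at u within {0..1})"
      by (auto intro!: derivative_eq_intros)
    have dh: "(h has_derivative frechet_derivative h (at (gam (z, u)))) (at (?a + u *\<^sub>R ?b))"
      using smooth_has_derivative[OF open_punct h(1) gam_punct[OF gz]] by (simp add: gam_line)
    have lin: "linear (frechet_derivative h (at (gam (z, u))))" using dh has_derivative_linear by blast
    have fe: "\<phi> = (\<lambda>u. h (?a + u *\<^sub>R ?b))" by (simp add: fun_eq_iff \<phi>_def gam_line)
    have "(\<phi> has_derivative (\<lambda>t. frechet_derivative h (at (gam (z, u))) (t *\<^sub>R ?b))) (at u within {0..1})"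
      unfolding fe using has_derivative_compose[OF dl dh] .
    then show ?thesis unfolding has_vector_derivative_def
      by (simp add: linear_scale[OF lin] Phi_def)
  qed
  have ftc: "((\<lambda>u. (1 - sig z) *\<^sub>R Phi h (z, u)) has_integral (\<phi> 1 - \<phi> 0)) {0..1}"
    by (rule fundamental_theorem_of_calculus) (auto intro: d)
  have p1: "\<phi> 1 = h z" by (simp add: \<phi>_def gam_def)
  have p0: "\<phi> 0 = 0" using h(2) gam0_null[OF z] by (simp add: \<phi>_def gam_def)
  have cont: "continuous_on {0..1} (\<lambda>u. Phi h (z, u))"
  proof -
    have "continuous_on (UU \<times> UNIV) (Phi h)" using smooth_Phi[OF h(1)] by (meson Ck_cont smooth_on_def)
    then show ?thesis by (rule continuous_on_compose2) (use z in \<open>auto intro!: continuous_intros\<close>)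
  qed
  have "((\<lambda>u. Phi h (z, u)) has_integral Iint h z) {0..1}"
    unfolding Iint_def using integrable_continuous_interval[OF cont] by (rule integrable_integral)
  from has_integral_cmul[OF this, of "1 - sig z"]
  have "((\<lambda>u. (1 - sig z) *\<^sub>R Phi h (z, u)) has_integral (1 - sig z) *\<^sub>R Iint h z) {0..1}" .
  from has_integral_unique[OF ftc this] show ?thesis using p1 p0 by simp
qed

definition Kf :: "('n::finite cvec \<Rightarrow> complex) \<Rightarrow> 'n cvec \<Rightarrow> complex" where
  "Kf h z = complex_of_real (inverse (rr0 z * (1 + sig z))) * Iint h z"

lemma UU_pos: "z \<in> UU \<Longrightarrow> rr0 z * (1 + sig z) > 0"
  using sig_nonneg[of z] by (simp add: UU_def add_pos_nonneg)

lemma smooth_Kf: "smooth_on punct h \<Longrightarrow> smooth_on UU (Kf h)"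
proof -
  assume h: "smooth_on punct h"
  have q: "smooth_on UU (\<lambda>z. rr0 z * (1 + sig z))"
    by (intro smooth_mult[OF open_UU] smooth_add[OF open_UU] smooth_rr[OF open_UU] smooth_const[OF open_UU] smooth_sig)
  have "smooth_on UU (\<lambda>z. inverse (rr0 z * (1 + sig z)))"
    by (rule smooth_compose[OF open_UU _ _ q smooth_inverse]) (use UU_pos in force)+
  then show ?thesis unfolding Kf_def[abs_def]
    by (intro smooth_mult[OF open_UU] smooth_Iint[OF h] smooth_linear[OF open_UU bounded_linear_of_real])
qed

lemma h_eq_LK:
  fixes h :: "'n::finite cvec \<Rightarrow> complex"
  assumes h: "smooth_on punct h" "\<forall>z\<in>nullcone. h z = 0" and z: "z \<in> UU"
  shows "h z = Lc z * Kf h z"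
proof -
  have r0: "rr0 z > 0" using z by (simp add: UU_def)
  have s0: "sig z \<ge> 0" by (rule sig_nonneg)
  have sq: "rr0 z * (sig z)\<^sup>2 = rr1 z" using sig_sq[OF z] r0 by simp
  have e: "1 - sig z = Lform z * inverse (rr0 z * (1 + sig z))"
  proof -
    have "(1 - sig z) * (rr0 z * (1 + sig z)) = Lform z"
      using sq by (simp add: Lform_rr algebra_simps power2_eq_square)
    then show ?thesis using UU_pos[OF z] by (simp add: field_simps)
  qed
  have "h z = (1 - sig z) *\<^sub>R Iint h z" by (rule ftc_h[OF h z])
  also have "\<dots> = Lc z * Kf h z"
    by (simp add: scaleR_conv_of_real e Lc_def Kf_def)
  finally show ?thesis .
qed

lemma cont_Lform: "continuous_on UNIV Lform"
  unfolding Lform_rr[abs_def] by (intro continuous_on_diff cont_rr)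

lemma homg_density:
  fixes g :: "'n::finite cvec \<Rightarrow> complex"
  assumes cont: "continuous_on punct g"
    and off: "\<And>z c. z \<noteq> 0 \<Longrightarrow> c \<noteq> 0 \<Longrightarrow> Lform z \<noteq> 0 \<Longrightarrow> g (c *s z) = c powi p * cnj c powi q * g z"
  shows "homg p q g"
  unfolding homg_def
proof (intro allI impI)
  fix z :: "'n cvec" and c :: complex
  assume zc: "z \<noteq> 0 \<and> c \<noteq> 0"
  show "g (c *s z) = c powi p * cnj c powi q * g z"
  proof (cases "Lform z = 0")
    case False then show ?thesis using off zc by blast
  next
    case True
    then have zN: "z \<in> nullcone" using zc by (simp add: nullcone_def)
    then have r0: "rr0 z > 0" and eq: "rr0 z = rr1 z"
      using nullcone_UU by (auto simp: UU_def nullcone_def Lform_rr)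
    define x where "x t = z + t *\<^sub>R axN z" for t :: real
    have xN: "x t $ None = (1 + t) *\<^sub>R z $ None" for t by (simp add: x_def axN_def axis_def algebra_simps)
    have xS: "x t $ Some j = z $ Some j" for t j by (simp add: x_def axN_def axis_def)
    have Lx: "Lform (x t) = rr0 z * ((1 + t)\<^sup>2 - 1)" for t
    proof -
      have "rr0 (x t) = (1 + t)\<^sup>2 * rr0 z" unfolding rr0_def xN by (simp add: power_mult_distrib)
      moreover have "rr1 (x t) = rr1 z" unfolding rr1_def xS ..
      ultimately show ?thesis using eq by (simp add: Lform_rr algebra_simps)
    qed
    have pos: "Lform (x t) \<noteq> 0" if "t > 0" for t
    proof -
      have "(1 + t)\<^sup>2 - 1 = t * (t + 2)" by (simp add: power2_eq_square algebra_simps)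
      moreover have "t * (t + 2) > 0" using that by simp
      ultimately have "(1 + t)\<^sup>2 - 1 > 0" by simp
      then show ?thesis using r0 Lx by simp
    qed
    have xnz: "x t \<noteq> 0" if "t > 0" for t
      using pos[OF that] by (auto simp: Lform_def)
    let ?K = "c powi p * cnj c powi q"
    have ev: "eventually (\<lambda>t. g (c *s x t) = ?K * g (x t)) (at_right 0)"
      unfolding eventually_at_right_field using off zc xnz pos by (intro exI[of _ 1]) auto
    have x0: "x 0 = z" by (simp add: x_def)
    have cx: "isCont x 0" unfolding x_def by (intro continuous_intros)
    have cgz: "isCont g z" using cont zc unfolding continuous_on_eq_continuous_at[OF open_punct] by (simp add: in_punct)
    have cgcz: "isCont g (c *s z)" using cont zc smult_nz[of c z] unfolding continuous_on_eq_continuous_at[OF open_punct] by (simp add: in_punct)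
    have csm: "isCont (\<lambda>v::'n cvec. c *s v) (x 0)" by (rule linear_continuous_at[OF bl_smult_left])
    have t1: "((\<lambda>t. g (c *s x t)) \<longlongrightarrow> g (c *s z)) (at_right 0)"
    proof -
      have "isCont (\<lambda>t. g (c *s x t)) 0"
        using isCont_o2[OF isCont_o2[OF cx csm]] cgcz x0 by simp
      then show ?thesis using x0 by (simp add: isCont_def filterlim_at_split)
    qed
    have t2: "((\<lambda>t. ?K * g (x t)) \<longlongrightarrow> ?K * g z) (at_right 0)"
    proof -
      have "isCont (\<lambda>t. g (x t)) 0" using isCont_o2[OF cx] cgz x0 by simp
      then have "((\<lambda>t. g (x t)) \<longlongrightarrow> g z) (at_right 0)" using x0 by (simp add: isCont_def filterlim_at_split)
      then show ?thesis by (intro tendsto_mult tendsto_const)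
    qed
    have t1': "((\<lambda>t. ?K * g (x t)) \<longlongrightarrow> g (c *s z)) (at_right 0)"
      using tendsto_cong[OF ev] t1 by blast
    show ?thesis using tendsto_unique[OF trivial_limit_at_right_real t1' t2] .
  qed
qed

definition hdiv :: "('n::finite cvec \<Rightarrow> complex) \<Rightarrow> 'n cvec \<Rightarrow> complex" where
  "hdiv h z = (if Lform z = 0 then Kf h z else h z / Lc z)"

lemma division:
  fixes h :: "'n::finite cvec \<Rightarrow> complex"
  assumes h: "smooth_on punct h" "homg p p h" "\<forall>z\<in>nullcone. h z = 0"
  shows "\<exists>h'. smooth_on punct h' \<and> homg (p - 1) (p - 1) h' \<and> (\<forall>z\<in>punct. h z = Lc z * h' z)"
proof -
  have Lc0: "Lc z = 0 \<longleftrightarrow> Lform z = 0" for z by (simp add: Lc_def)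
  have onU: "hdiv h x = Kf h x" if x: "x \<in> UU" for x
  proof (cases "Lform x = 0")
    case True then show ?thesis by (simp add: hdiv_def)
  next
    case False
    then have "Lc x \<noteq> 0" using Lc0 by blast
    then show ?thesis using h_eq_LK[OF h(1,3) x] False by (simp add: hdiv_def)
  qed
  define V :: "'n cvec set" where "V = punct \<inter> {x. Lform x \<noteq> 0}"
  have oV: "open V" unfolding V_def
    by (intro open_Int open_punct open_Collect_neq cont_Lform continuous_on_const)
  have sV: "smooth_on V (hdiv h)"
  proof -
    have si: "smooth_on V (\<lambda>x. inverse (Lc x))"
      by (rule smooth_compose[OF oV _ _ smooth_Lc[OF oV] smooth_inverse]) (auto simp: V_def Lc0)
    have "smooth_on V (\<lambda>x. h x * inverse (Lc x))"
      by (intro smooth_mult[OF oV] si smooth_subset[OF h(1)]) (auto simp: V_def)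
    then show ?thesis by (rule smooth_cong[OF oV]) (auto simp: V_def hdiv_def divide_inverse)
  qed
  have sU: "smooth_on UU (hdiv h)"
    by (rule smooth_cong[OF open_UU smooth_Kf[OF h(1)]]) (simp add: onU)
  have sm: "smooth_on punct (hdiv h)"
  proof (rule smooth_local[OF open_punct])
    fix x :: "'n cvec" assume x: "x \<in> punct"
    show "\<exists>U. open U \<and> x \<in> U \<and> U \<subseteq> punct \<and> smooth_on U (hdiv h)"
    proof (cases "Lform x = 0")
      case True
      then have "x \<in> nullcone" using x by (simp add: nullcone_def in_punct)
      then show ?thesis using nullcone_UU UU_punct open_UU sU by blast
    next
      case False then show ?thesis using x oV sV by (intro exI[of _ V]) (auto simp: V_def)
    qed
  qed
  have eq: "\<forall>z\<in>punct. h z = Lc z * hdiv h z"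
  proof
    fix z :: "'n cvec" assume z: "z \<in> punct"
    show "h z = Lc z * hdiv h z"
    proof (cases "Lform z = 0")
      case True
      then have "z \<in> nullcone" using z by (simp add: nullcone_def in_punct)
      then show ?thesis using h(3) True by (simp add: Lc_def)
    next
      case False
      then have "Lc z \<noteq> 0" using Lc0 by blast
      then show ?thesis using False by (simp add: hdiv_def)
    qed
  qed
  have hom: "homg (p - 1) (p - 1) (hdiv h)"
  proof (rule homg_density)
    show "continuous_on punct (hdiv h)" using sm by (meson Ck_cont smooth_on_def)
  next
    fix z :: "'n cvec" and c :: complex
    assume z: "z \<noteq> 0" and c: "c \<noteq> 0" and L: "Lform z \<noteq> 0"
    have Lcz: "Lc (c *s z) = c * cnj c * Lc z" by (simp add: Lc_sum sum_distrib_left algebra_simps)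
    have Lz: "Lc z \<noteq> 0" using L Lc0 by blast
    have cc: "cnj c \<noteq> 0" using c by simp
    have Lcz0: "Lc (c *s z) \<noteq> 0" using Lcz Lz c cc by simp
    then have Lf: "Lform (c *s z) \<noteq> 0" using Lc0 by blast
    have "hdiv h (c *s z) = h (c *s z) / Lc (c *s z)" using Lf by (simp add: hdiv_def)
    also have "\<dots> = (c powi p * cnj c powi p * h z) / (c * cnj c * Lc z)"
      using h(2) z c by (simp add: homg_def Lcz)
    also have "\<dots> = c powi (p - 1) * cnj c powi (p - 1) * (h z / Lc z)"
      using c cc by (simp add: power_int_diff field_simps)
    also have "\<dots> = c powi (p - 1) * cnj c powi (p - 1) * hdiv h z" using L by (simp add: hdiv_def)
    finally show "hdiv h (c *s z) = c powi (p - 1) * cnj c powi (p - 1) * hdiv h z" .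
  qed
  show ?thesis using sm hom eq by blast
qed


lemma nullcone_punct: "nullcone \<subseteq> punct"
  by (auto simp: nullcone_def punct_def)

lemma Lc_null: "z \<in> nullcone \<Longrightarrow> Lc z = 0"
  by (simp add: nullcone_def Lc_def)

lemma Lform_Re: "Lform z = Re (Lc z)"
  by (simp add: Lc_def)

lemma smooth_of_real: "smooth_on punct F \<Longrightarrow> smooth_on punct (\<lambda>x. complex_of_real (F x))"
  by (rule smooth_linear[OF open_punct bounded_linear_of_real])

lemma smooth_Re: "smooth_on punct h \<Longrightarrow> smooth_on punct (\<lambda>x. Re (h x))"
  by (rule smooth_linear[OF open_punct bounded_linear_Re])

lemma smooth_Lform: "smooth_on punct Lform"
  using smooth_Re[OF smooth_Lc[OF open_punct]] by (simp add: Lform_Re[abs_def])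

lemma hom00_homg: "hom00 F \<longleftrightarrow> homg 0 0 (\<lambda>x. complex_of_real (F x))"
  by (simp add: hom00_def homg_def)

lemma homg_Re: "homg p p h \<Longrightarrow> homg p p (\<lambda>x. complex_of_real (Re (h x :: complex)))"
proof -
  assume h: "homg p p h"
  show ?thesis unfolding homg_def
  proof (intro allI impI)
    fix z :: "'a cvec" and c :: complex assume zc: "z \<noteq> 0 \<and> c \<noteq> 0"
    have r: "c powi p * cnj c powi p = complex_of_real ((cmod (c powi p))\<^sup>2)"
      by (subst complex_norm_square) simp
    have "h (c *s z) = complex_of_real ((cmod (c powi p))\<^sup>2) * h z"
      using h zc r by (simp add: homg_def)
    then show "complex_of_real (Re (h (c *s z))) = c powi p * cnj c powi p * complex_of_real (Re (h z))"
      using r by simp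
  qed
qed

lemma LapPow_cong:
  assumes "smooth_on punct G" "smooth_on punct H" "\<forall>x\<in>punct. G x = H x"
  shows "\<forall>z\<in>punct. (Lap ^^ m) G z = (Lap ^^ m) H z"
proof (induction m)
  case 0 then show ?case using assms by simp
next
  case (Suc m)
  show ?case
  proof
    fix z :: "'a cvec" assume z: "z \<in> punct"
    show "(Lap ^^ Suc m) G z = (Lap ^^ Suc m) H z"
      unfolding funpow.simps o_def
      by (rule Lap_cong[OF open_punct z _ smooth_Lap_pow[OF assms(2)]]) (use Suc.IH in blast)
  qed
qed

lemma LapPow_add:
  assumes "smooth_on punct G" "smooth_on punct H"
  shows "\<forall>z\<in>punct. (Lap ^^ m) (\<lambda>x. G x + H x) z = (Lap ^^ m) G z + (Lap ^^ m) H z"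
proof (induction m)
  case 0 then show ?case by simp
next
  case (Suc m)
  have s: "smooth_on punct (\<lambda>x. (Lap ^^ m) G x + (Lap ^^ m) H x)"
    by (intro smooth_add[OF open_punct] smooth_Lap_pow assms)
  show ?case
  proof
    fix z :: "'a cvec" assume z: "z \<in> punct"
    have "(Lap ^^ Suc m) (\<lambda>x. G x + H x) z = Lap (\<lambda>x. (Lap ^^ m) G x + (Lap ^^ m) H x) z"
      unfolding funpow.simps o_def
      by (rule Lap_cong[OF open_punct z _ s]) (use Suc.IH in blast)
    also have "\<dots> = (Lap ^^ Suc m) G z + (Lap ^^ Suc m) H z"
      unfolding funpow.simps o_def
      by (rule Lap_add[OF open_punct z smooth_Lap_pow[OF assms(1)] smooth_Lap_pow[OF assms(2)]])
    finally show "(Lap ^^ Suc m) (\<lambda>x. G x + H x) z = (Lap ^^ Suc m) G z + (Lap ^^ Suc m) H z" .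
  qed
qed

definition Pinv :: "('n::finite cvec \<Rightarrow> real) \<Rightarrow> ('n cvec \<Rightarrow> complex) \<Rightarrow> nat \<Rightarrow> bool" where
  "Pinv f G0 j \<longleftrightarrow> (\<exists>F w h. hom_ext f F \<and> smooth_on punct w \<and> homg (-1) (-1) w
     \<and> (\<forall>z\<in>punct. complex_of_real (F z) = G0 z + Lc z * w z)
     \<and> smooth_on punct h \<and> homg (- int (Suc j)) (- int (Suc j)) h
     \<and> (\<forall>z\<in>punct. Lap (\<lambda>x. complex_of_real (F x)) z = Lc z ^ j * h z))"

lemma Lc_real: "Lc z ^ m = complex_of_real (Lform z ^ m)"
  by (simp add: Lc_def)

lemma step_regular:
  fixes f :: "'n::finite cvec \<Rightarrow> real"
  assumes P: "Pinv f G0 m" and ne: "Suc m \<noteq> CARD('n)"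
  shows "Pinv f G0 (Suc m)"
proof -
  obtain F w h where F: "hom_ext f F" and w: "smooth_on punct w" "homg (-1) (-1) w"
    and Fw: "\<forall>z\<in>punct. complex_of_real (F z) = G0 z + Lc z * w z"
    and h: "smooth_on punct h" "homg (- int (Suc m)) (- int (Suc m)) h"
    and LF: "\<forall>z\<in>punct. Lap (\<lambda>x. complex_of_real (F x)) z = Lc z ^ m * h z"
    using P unfolding Pinv_def by blast
  let ?n = "CARD('n)"
  let ?j = "Suc m"
  define Fc where "Fc = (\<lambda>x. complex_of_real (F x))"
  define hr where "hr = (\<lambda>x. complex_of_real (Re (h x)))"
  have sF: "smooth_on punct F" and hF: "hom00 F" and nF: "\<forall>z\<in>nullcone. F z = f z"
    using F by (auto simp: hom_ext_def)
  have sFc: "smooth_on punct Fc" unfolding Fc_def by (rule smooth_of_real[OF sF])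
  have hFc: "homg 0 0 Fc" using hF by (simp add: hom00_homg Fc_def)
  have shr: "smooth_on punct hr" unfolding hr_def by (rule smooth_of_real[OF smooth_Re[OF h(1)]])
  have hhr: "homg (- int ?j) (- int ?j) hr" unfolding hr_def by (rule homg_Re[OF h(2)])
  have LFr: "Lap Fc z = Lc z ^ m * hr z" if z: "z \<in> punct" for z
  proof -
    have "Lap Fc z = complex_of_real (Re (Lap Fc z))"
      using Lap_real[OF sF z] unfolding Fc_def by (simp add: complex_eq_iff)
    also have "\<dots> = Lc z ^ m * hr z"
      using LF z by (simp add: Fc_def hr_def Lc_real)
    finally show ?thesis .
  qed
  define kr where "kr = real ?j * (real ?n - real ?j)"
  have kr0: "kr \<noteq> 0" using ne by (simp add: kr_def)
  define g where "g = (\<lambda>x. - Re (h x) / kr)"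
  define gc where "gc = (\<lambda>x. complex_of_real (g x))"
  have gc_eq: "gc = (\<lambda>x. complex_of_real (- 1 / kr) * hr x)"
    by (simp add: fun_eq_iff gc_def g_def hr_def)
  have sg: "smooth_on punct g"
    unfolding g_def using smooth_mult[OF open_punct smooth_Re[OF h(1)] smooth_const[OF open_punct, of "- 1 / kr"]]
    by (simp add: divide_inverse)
  have sgc: "smooth_on punct gc" unfolding gc_def by (rule smooth_of_real[OF sg])
  have hgc: "homg (- int ?j) (- int ?j) gc" unfolding gc_eq by (rule homg_cmult[OF hhr])
  define F' where "F' = (\<lambda>x. F x + Lform x ^ ?j * g x)"
  have F'c: "(\<lambda>x. complex_of_real (F' x)) = (\<lambda>x. Fc x + Lc x ^ ?j * gc x)"
    by (simp add: fun_eq_iff F'_def Fc_def gc_def Lc_real del: power_Suc)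
  have sF': "smooth_on punct F'"
    unfolding F'_def
    by (intro smooth_add[OF open_punct] sF smooth_mult[OF open_punct] smooth_power[OF open_punct] smooth_Lform sg)
  have hgj: "homg 0 0 (\<lambda>x. Lc x ^ ?j * gc x)"
    using homg_mult[OF homg_Lc_pow[of ?j] hgc] by simp
  have hF': "hom00 F'"
    unfolding hom00_homg F'c using homg_add[OF hFc hgj] .
  have nF': "\<forall>z\<in>nullcone. F' z = f z"
    using nF by (simp add: F'_def nullcone_def)
  define w' where "w' = (\<lambda>x. w x + Lc x ^ m * gc x)"
  have sw': "smooth_on punct w'"
    unfolding w'_def
    by (intro smooth_add[OF open_punct] w(1) smooth_mult[OF open_punct] smooth_power[OF open_punct] smooth_Lc[OF open_punct] sgc)
  have hw': "homg (-1) (-1) w'"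
  proof -
    have "homg (int m + - int ?j) (int m + - int ?j) (\<lambda>x. Lc x ^ m * gc x)"
      using homg_mult[OF homg_Lc_pow[of m] hgc] .
    then have "homg (-1) (-1) (\<lambda>x. Lc x ^ m * gc x)" by simp
    then show ?thesis unfolding w'_def using homg_add[OF w(2)] by blast
  qed
  have Fw': "\<forall>z\<in>punct. complex_of_real (F' z) = G0 z + Lc z * w' z"
  proof
    fix z :: "'n cvec" assume z: "z \<in> punct"
    have "complex_of_real (F' z) = Fc z + Lc z ^ ?j * gc z" using fun_cong[OF F'c, of z] by simp
    also have "\<dots> = G0 z + Lc z * w' z"
      using Fw z by (simp add: Fc_def w'_def algebra_simps)
    finally show "complex_of_real (F' z) = G0 z + Lc z * w' z" .
  qed
  define h' where "h' = Lap gc"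
  have sh': "smooth_on punct h'" unfolding h'_def by (rule smooth_Lap[OF open_punct sgc])
  have hh': "homg (- int (Suc ?j)) (- int (Suc ?j)) h'"
    unfolding h'_def using homg_Lap[OF sgc hgc] by (simp add: algebra_simps)
  have LF': "Lap (\<lambda>x. complex_of_real (F' x)) z = Lc z ^ ?j * h' z" if z: "z \<in> punct" for z
  proof -
    have sLg: "smooth_on punct (\<lambda>x. Lc x ^ ?j * gc x)"
      by (intro smooth_mult[OF open_punct] smooth_power[OF open_punct] smooth_Lc[OF open_punct] sgc)
    have "Lap (\<lambda>x. complex_of_real (F' x)) z = Lap Fc z + Lap (\<lambda>x. Lc x ^ ?j * gc x) z"
      unfolding F'c by (rule Lap_add[OF open_punct z sFc sLg])
    also have "Lap (\<lambda>x. Lc x ^ ?j * gc x) z = Lc z ^ ?j * Lap gc z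
        + of_nat ?j * (of_nat ?n + of_nat ?j + of_int (- int ?j) + of_int (- int ?j)) * Lc z ^ m * gc z"
      using Lap_Lcpow[OF sgc hgc, of m] z by blast
    also have "of_nat ?j * (of_nat ?n + of_nat ?j + of_int (- int ?j) + of_int (- int ?j)) * Lc z ^ m * gc z
        = - (Lc z ^ m * hr z)"
    proof -
      have "of_nat ?j * (of_nat ?n + of_nat ?j + of_int (- int ?j) + of_int (- int ?j)) = (complex_of_real kr)"
        by (simp add: kr_def)
      then show ?thesis using kr0 by (simp add: gc_eq)
    qed
    finally show ?thesis using LFr[OF z] by (simp add: h'_def)
  qed
  have "hom_ext f F'" using sF' hF' nF' by (simp add: hom_ext_def)
  then show ?thesis unfolding Pinv_def
    using sw' hw' Fw' sh' hh' LF' by blast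
qed

lemma LapPow_nullcone_prod:
  fixes h :: "'n::finite cvec \<Rightarrow> complex"
  assumes h: "smooth_on punct h" "homg (- int CARD('n)) (- int CARD('n)) h"
  shows "\<forall>z\<in>nullcone. (Lap ^^ s) (\<lambda>x. Lc x ^ s * h x) z
           = (\<Prod>t\<in>{1..s}. of_nat t * (of_nat t - of_nat CARD('n))) * h z"
proof (induction s)
  case 0 then show ?case by simp
next
  case (Suc s)
  let ?n = "CARD('n)"
  let ?W = "\<lambda>x. Lc x ^ s * h x"
  have sW: "smooth_on punct ?W"
    by (intro smooth_mult[OF open_punct] smooth_power[OF open_punct] smooth_Lc[OF open_punct] h(1))
  have hW: "homg (int s + - int ?n) (int s + - int ?n) ?W"
    using homg_mult[OF homg_Lc_pow[of s] h(2)] .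
  show ?case
  proof
    fix z :: "'n cvec" assume z: "z \<in> nullcone"
    then have zp: "z \<in> punct" using nullcone_punct by blast
    have e: "(\<lambda>x. Lc x ^ Suc s * h x) = (\<lambda>x. Lc x * ?W x)" by (simp add: fun_eq_iff mult.assoc)
    have "(Lap ^^ Suc s) (\<lambda>x. Lc x ^ Suc s * h x) z
        = Lc z * (Lap ^^ Suc s) ?W z + of_nat (Suc s) * (of_nat ?n + 1 + of_int (int s + - int ?n) + of_int (int s + - int ?n) - of_nat s) * (Lap ^^ s) ?W z"
      unfolding e using LapPow_Lc[OF sW hW, of s] zp by blast
    also have "\<dots> = of_nat (Suc s) * (of_nat (Suc s) - of_nat ?n) * (Lap ^^ s) ?W z"
      using Lc_null[OF z] by (simp add: algebra_simps)
    finally show "(Lap ^^ Suc s) (\<lambda>x. Lc x ^ Suc s * h x) z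
           = (\<Prod>t\<in>{1..Suc s}. of_nat t * (of_nat t - of_nat ?n)) * h z"
      using Suc.IH z by (simp add: prod.cl_ivl_Suc algebra_simps)
  qed
qed

lemma step_critical:
  fixes f :: "'n::finite cvec \<Rightarrow> real"
  assumes P: "Pinv f G0 m" and eq: "Suc m = CARD('n)"
    and sG0: "smooth_on punct G0"
    and Q: "\<forall>z\<in>nullcone. (Lap ^^ CARD('n)) G0 z = 0"
  shows "Pinv f G0 (Suc m)"
proof -
  obtain F w h where F: "hom_ext f F" and w: "smooth_on punct w" "homg (-1) (-1) w"
    and Fw: "\<forall>z\<in>punct. complex_of_real (F z) = G0 z + Lc z * w z"
    and h: "smooth_on punct h" "homg (- int (Suc m)) (- int (Suc m)) h"
    and LF: "\<forall>z\<in>punct. Lap (\<lambda>x. complex_of_real (F x)) z = Lc z ^ m * h z"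
    using P unfolding Pinv_def by blast
  let ?n = "CARD('n)"
  define Fc where "Fc = (\<lambda>x. complex_of_real (F x))"
  have sF: "smooth_on punct F" using F by (auto simp: hom_ext_def)
  have sFc: "smooth_on punct Fc" unfolding Fc_def by (rule smooth_of_real[OF sF])
  have sLw: "smooth_on punct (\<lambda>x. Lc x * w x)" by (rule smooth_Lc_mult[OF w(1)])
  have sGw: "smooth_on punct (\<lambda>x. G0 x + Lc x * w x)" by (intro smooth_add[OF open_punct] sG0 sLw)
  have A: "(Lap ^^ ?n) Fc z = 0" if z: "z \<in> nullcone" for z
  proof -
    have zp: "z \<in> punct" using z nullcone_punct by blast
    have "(Lap ^^ ?n) Fc z = (Lap ^^ ?n) (\<lambda>x. G0 x + Lc x * w x) z"
      using LapPow_cong[OF sFc sGw, of ?n] Fw zp unfolding Fc_def by blast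
    also have "\<dots> = (Lap ^^ ?n) G0 z + (Lap ^^ ?n) (\<lambda>x. Lc x * w x) z"
      using LapPow_add[OF sG0 sLw] zp by blast
    also have "(Lap ^^ ?n) (\<lambda>x. Lc x * w x) z = 0"
    proof -
      have "(Lap ^^ Suc m) (\<lambda>x. Lc x * w x) z = Lc z * (Lap ^^ Suc m) w z
          + of_nat (Suc m) * (of_nat ?n + 1 + of_int (-1) + of_int (-1) - of_nat m) * (Lap ^^ m) w z"
        using LapPow_Lc[OF w, of m] zp by blast
      also have "\<dots> = 0" by (simp add: Lc_null[OF z] flip: eq)
      finally show ?thesis using eq by simp
    qed
    finally show ?thesis using Q z by simp
  qed
  have sLh: "smooth_on punct (\<lambda>x. Lc x ^ m * h x)"
    by (intro smooth_mult[OF open_punct] smooth_power[OF open_punct] smooth_Lc[OF open_punct] h(1))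
  have B: "(Lap ^^ m) (\<lambda>x. Lc x ^ m * h x) z = 0" if z: "z \<in> nullcone" for z
  proof -
    have zp: "z \<in> punct" using z nullcone_punct by blast
    have "(Lap ^^ ?n) Fc z = (Lap ^^ m) (Lap Fc) z"
      by (simp add: eq[symmetric] funpow_Suc_right del: funpow.simps)
    also have "\<dots> = (Lap ^^ m) (\<lambda>x. Lc x ^ m * h x) z"
      using LapPow_cong[OF smooth_Lap[OF open_punct sFc] sLh, of m] LF zp unfolding Fc_def by blast
    finally show ?thesis using A[OF z] by simp
  qed
  have hn: "homg (- int ?n) (- int ?n) h" using h(2) eq by simp
  have h0: "\<forall>z\<in>nullcone. h z = 0"
  proof
    fix z :: "'n cvec" assume z: "z \<in> nullcone"
    have "(\<Prod>t\<in>{1..m}. of_nat t * (of_nat t - of_nat ?n) :: complex) * h z = 0"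
      using LapPow_nullcone_prod[OF h(1) hn, of m] B[OF z] z by simp
    moreover have "(\<Prod>t\<in>{1..m}. of_nat t * (of_nat t - of_nat ?n) :: complex) \<noteq> 0"
    proof -
      have "of_nat t * (of_nat t - of_nat ?n) \<noteq> (0::complex)" if "t \<in> {1..m}" for t
      proof -
        have "t \<noteq> 0" "t \<noteq> ?n" using that eq by auto
        then have "(of_nat t :: complex) \<noteq> 0" "(of_nat t :: complex) \<noteq> of_nat ?n" by auto
        then show ?thesis by simp
      qed
      then show ?thesis by (simp add: prod_zero_iff)
    qed
    ultimately show "h z = 0" by simp
  qed
  obtain h' where h': "smooth_on punct h'" "homg (- int (Suc m) - 1) (- int (Suc m) - 1) h'"
    "\<forall>z\<in>punct. h z = Lc z * h' z"
    using division[OF h h0] by blast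
  have "homg (- int (Suc (Suc m))) (- int (Suc (Suc m))) h'" using h'(2) by (simp add: algebra_simps)
  moreover have "\<forall>z\<in>punct. Lap (\<lambda>x. complex_of_real (F x)) z = Lc z ^ Suc m * h' z"
    using LF h'(3) by (simp add: algebra_simps)
  ultimately show ?thesis unfolding Pinv_def using F w Fw h'(1) by blast
qed

theorem mainTheorem4:
  fixes f :: "'n::finite cvec \<Rightarrow> real" and k :: nat
  assumes "CARD('n) \<ge> 2"
    and "f \<in> Eclass"
    and "\<forall>\<zeta>\<in>nullcone. Qop f \<zeta> = 0"
    and "k \<ge> 1"
  shows "\<exists>F :: 'n cvec \<Rightarrow> real. smooth_on punct F \<and> hom00 F \<and> (\<forall>\<zeta>\<in>nullcone. F \<zeta> = f \<zeta>)
           \<and> bigO_L k (Lap (\<lambda>z. complex_of_real (F z)))"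
proof -
  define F0 where "F0 = (SOME F. hom_ext f F)"
  have F0: "hom_ext f F0" unfolding F0_def using someI_ex[OF exists_hom_ext[OF assms(2)]] .
  define G0 where "G0 = (\<lambda>z. complex_of_real (F0 z))"
  have sF0: "smooth_on punct F0" and hF0: "hom00 F0" using F0 by (auto simp: hom_ext_def)
  have sG0: "smooth_on punct G0" unfolding G0_def by (rule smooth_of_real[OF sF0])
  have hG0: "homg 0 0 G0" using hF0 by (simp add: hom00_homg G0_def)
  have Q: "\<forall>z\<in>nullcone. (Lap ^^ CARD('n)) G0 z = 0"
    using assms(3) by (simp add: Qop_def G0_def F0_def)
  have P: "Pinv f G0 m" for m
  proof (induction m)
    case 0
    have "homg (- int (Suc 0)) (- int (Suc 0)) (Lap G0)" using homg_Lap[OF sG0 hG0] by simp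
    moreover have "smooth_on punct (\<lambda>x. 0::complex)" by (rule smooth_const[OF open_punct])
    moreover have "homg (-1) (-1) (\<lambda>x. 0::complex)" by (rule homg_zero)
    ultimately show ?case unfolding Pinv_def
      using F0 smooth_Lap[OF open_punct sG0]
      by (intro exI[of _ F0] exI[of _ "\<lambda>x. 0"] exI[of _ "Lap G0"]) (auto simp: G0_def)
  next
    case (Suc m)
    show ?case
    proof (cases "Suc m = CARD('n)")
      case True then show ?thesis using step_critical[OF Suc.IH True sG0 Q] by blast
    next
      case False then show ?thesis using step_regular[OF Suc.IH False] by blast
    qed
  qed
  obtain F w h where F: "hom_ext f F"
    and h: "smooth_on punct h"
    and LF: "\<forall>z\<in>punct. Lap (\<lambda>x. complex_of_real (F x)) z = Lc z ^ k * h z"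
    using P[of k] unfolding Pinv_def by blast
  have "bigO_L k (Lap (\<lambda>z. complex_of_real (F z)))"
    unfolding bigO_L_def using h LF by (auto simp: Lc_real)
  then show ?thesis using F by (auto simp: hom_ext_def)
qed


end
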